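(* Consider the static single-object erasure-coded Byzantine read/write protocol described in the context over a set $C$ of flexnodes, at most $b<\frac{|C|-k}{3}$ of which are Byzantine, and suppose at most $\delta$ write operations are concurrent with any read. In any execution, if $\phi$ is a complete put-data$(\langle t_\phi,v_\phi\rangle)$ primitive on $C$ and $\pi$ is a get-tag or get-data primitive on $C$ invoked after $\phi$ completes, then $\pi$ returns a tag $t_\pi$ (for get-data, a pair $\langle t_\pi,v_\pi\rangle$) with $t_\pi\ge t_\phi$.
   Context: Model. $C$ is a fixed finite set of processes ("flexnodes") over asynchronous reliable channels (messages between nonfaulty processes eventually delivered unaltered). Up to $b$ flexnodes may be Byzantine. Processes invoking reads/writes follow the protocol but may crash. Signatures are unforgeable (no process can produce a valid signature of another). An $[n,k]$ RLNC code with $n=|C|$: $\mathrm{Encode}(v)$ produces $|C|$ coded elements, any $k$ of which (from the same encoding) recover $v$. Tags are pairs $(z,w)$, $z\in\mathbb{N}$, $w$ a writer identifier, ordered lexicographically. A parameter $\delta\ge1$ is fixed. A quorum is any subset of $C$ of size $\lceil (2|C|+k)/3\rceil$. State. Each flexnode keeps a set $List$ of signed triples $(\langle t,e\rangle,\sigma)$, initially holding the initial pair with tag $t_0$. Primitives (by flexnode $p$): get-tag: query all, each replies with its signed max-tag entry, wait for replies from a quorum, return the maximum tag among replies with valid signatures. put-data$(\langle t,v\rangle)$: encode $v$ into $e_1,\dots,e_{|C|}$, send $\langle t,e_j\rangle$ signed by $p$ to the $j$-th flexnode; a receiver adds it to $List$ if the signature verifies and no entry with tag $t$ exists, then if $|List|>\delta+1$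 removes the entries with minimum tag, and acknowledges; $p$ waits for a quorum of acknowledgements. get-data: query all, each replies with its $List$, wait for a quorum, keep verified pairs, take the maximum tag appearing in at least $k$ received lists, decode and return it with its tag; if no such tag exists the primitive does not complete. Operations: read = get-data then put-data of the obtained pair, returning it; write$(v)$ by $w$ = get-tag returning $t$, then put-data$(\langle (t.z+1,w),v\rangle)$. A primitive completes before another is invoked if its response step precedes the other's invocation step. *)

theory Defs
  imports Complex_Main "HOL-Library.Product_Lexorder"
begin

text \<open>
  Conventions.
  'p : flexnode identifiers; the fixed finite set C of flexnodes is a parameter.
  'c : identifiers of the (non-Byzantine, possibly crashing) client processes that
       invoke reads/writes; they are the writer identifiers, and they are linearly
       ordered so that tags (z, w) are ordered lexicographically (Product_Lexorder).
  'v : values, 'e : coded elements.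
  A signed triple is modelled as (tag, coded element, signer), signer = Some c for a
  client c and None for the initial entries.  Unforgeability of signatures is modelled
  by the global set  signed  of all triples actually signed so far: a signature verifies
  iff the triple is in that set; Byzantine nodes may send arbitrary messages (with their
  own identity as channel sender) but cannot add triples to  signed.
\<close>

type_synonym 'c tag = "nat \<times> 'c"
type_synonym ('c,'e) item = "'c tag \<times> 'e \<times> 'c option"

datatype ('c,'p) pid = Cl 'c | Fx 'p

datatype ('c,'e) payload =
    PutReq nat "('c,'e) item"          \<comment> \<open>put-data message of primitive i\<close>
  | PutAck nat
  | TagReq nat                          \<comment> \<open>get-tag query of primitive i\<close>
  | TagRep nat "('c,'e) item"
  | DataReq nat                         \<comment> \<open>get-data query of primitive i\<close>
  | DataRep nat "('c,'e) item set"

text \<open>messages: (channel sender, destination, payload)\<close>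
type_synonym ('c,'p,'e) msg = "('c,'p) pid \<times> ('c,'p) pid \<times> ('c,'e) payload"

text \<open>GT opid primid v replies       : get-tag of a write of value v
  GD opid primid replies         : get-data of a read
  PD opid primid t v sent acks   : put-data of the pair (t, v)\<close>
datatype ('c,'p,'v,'e) phase =
    Idle
  | GT nat nat 'v "'p \<rightharpoonup> ('c,'e) item"
  | GD nat nat "'p \<rightharpoonup> ('c,'e) item set"
  | PD nat nat "'c tag" 'v "'p set" "'p set"

datatype opkind = ReadOp | WriteOp
datatype ('c,'v) pkind = GetTag | GetData | PutData "'c tag" 'v
datatype ('c,'v) presult = RTag "'c tag" | RPair "'c tag" 'v | RAck

datatype ('c,'v) event =
    OpInv nat 'c opkind
  | OpResp nat
  | PrimInv nat 'c "('c,'v) pkind"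
  | PrimResp nat "('c,'v) presult"

record ('p,'c,'v,'e) gstate =
  lst    :: "'p \<Rightarrow> ('c,'e) item set"
  net    :: "('c,'p,'e) msg set"
  signed :: "('c,'e) item set"
  ph     :: "'c \<Rightarrow> ('c,'p,'v,'e) phase"
  ctr    :: nat                                \<comment> \<open>fresh identifiers\<close>
  hist   :: "('c,'v) event list"

definition qsize :: "nat \<Rightarrow> nat \<Rightarrow> nat" where
  "qsize n k = nat \<lceil>real (2 * n + k) / 3\<rceil>"

definition is_quorum :: "'p set \<Rightarrow> nat \<Rightarrow> 'p set \<Rightarrow> bool" where
  "is_quorum C k Q \<longleftrightarrow> Q \<subseteq> C \<and> card Q = qsize (card C) k"

definition trim :: "nat \<Rightarrow> ('c::linorder,'e) item set \<Rightarrow> ('c,'e) item set" where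
  "trim \<delta> L = (if card L > \<delta> + 1 then {x \<in> L. fst x \<noteq> Min (fst ` L)} else L)"

definition add_entry :: "nat \<Rightarrow> ('c::linorder,'e) item set \<Rightarrow> ('c,'e) item \<Rightarrow> ('c,'e) item set" where
  "add_entry \<delta> L x = (if \<exists>y\<in>L. fst y = fst x then L else trim \<delta> (insert x L))"

definition crecv :: "('c,'p,'v,'e) phase \<Rightarrow> 'p \<Rightarrow> ('c,'e) payload \<Rightarrow> ('c,'p,'v,'e) phase" where
  "crecv P j pl = (case P of
      GT oi i v R \<Rightarrow> (case pl of TagRep i' x \<Rightarrow>
          if i' = i \<and> R j = None then GT oi i v (R(j \<mapsto> x)) else P | _ \<Rightarrow> P)
    | GD oi i R \<Rightarrow> (case pl of DataRep i' X \<Rightarrow>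
          if i' = i \<and> R j = None then GD oi i (R(j \<mapsto> X)) else P | _ \<Rightarrow> P)
    | PD oi i t v S A \<Rightarrow> (case pl of PutAck i' \<Rightarrow>
          if i' = i then PD oi i t v S (insert j A) else P | _ \<Rightarrow> P)
    | Idle \<Rightarrow> P)"

definition init_state :: "'p set \<Rightarrow> ('v \<Rightarrow> 'p \<Rightarrow> 'e) \<Rightarrow> 'c tag \<Rightarrow> 'v \<Rightarrow> ('p,'c,'v,'e) gstate" where
  "init_state C enc t0 v0 =
     \<lparr> lst = (\<lambda>j. {(t0, enc v0 j, None)}),
       net = {},
       signed = {(t0, enc v0 j, None) | j. j \<in> C},
       ph = (\<lambda>c. Idle),
       ctr = 0,
       hist = [] \<rparr>"

text \<open>Parameters: C flexnodes, B Byzantine flexnodes, k code dimension, \<delta> list bound,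
  enc (coded element for the j-th flexnode), dec (decoding from received (node, element) pairs).\<close>
inductive step :: "'p set \<Rightarrow> 'p set \<Rightarrow> nat \<Rightarrow> nat \<Rightarrow> ('v \<Rightarrow> 'p \<Rightarrow> 'e) \<Rightarrow> (('p \<times> 'e) set \<Rightarrow> 'v)
                   \<Rightarrow> ('p,'c::linorder,'v,'e) gstate \<Rightarrow> ('p,'c,'v,'e) gstate \<Rightarrow> bool"
  for C B k \<delta> enc dec where
  inv_write: "ph s c = Idle \<Longrightarrow>
    step C B k \<delta> enc dec s
      (s\<lparr> ph := (ph s)(c := GT (ctr s) (Suc (ctr s)) v Map.empty),
          ctr := ctr s + 2,
          net := net s \<union> {(Cl c, Fx j, TagReq (Suc (ctr s))) | j. j \<in> C},
          hist := hist s @ [OpInv (ctr s) c WriteOp, PrimInv (Suc (ctr s)) c GetTag] \<rparr>)"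
| inv_read: "ph s c = Idle \<Longrightarrow>
    step C B k \<delta> enc dec s
      (s\<lparr> ph := (ph s)(c := GD (ctr s) (Suc (ctr s)) Map.empty),
          ctr := ctr s + 2,
          net := net s \<union> {(Cl c, Fx j, DataReq (Suc (ctr s))) | j. j \<in> C},
          hist := hist s @ [OpInv (ctr s) c ReadOp, PrimInv (Suc (ctr s)) c GetData] \<rparr>)"
| client_recv: "(Fx j, Cl c, pl) \<in> net s \<Longrightarrow> j \<in> C \<Longrightarrow>
    step C B k \<delta> enc dec s
      (s\<lparr> net := net s - {(Fx j, Cl c, pl)},
          ph := (ph s)(c := crecv (ph s c) j pl) \<rparr>)"
| end_gettag: "ph s c = GT oi i v R \<Longrightarrow> is_quorum C k Q \<Longrightarrow> Q \<subseteq> dom R \<Longrightarrow>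
    T = {fst x | x j. j \<in> Q \<and> R j = Some x \<and> x \<in> signed s} \<Longrightarrow> T \<noteq> {} \<Longrightarrow>
    step C B k \<delta> enc dec s
      (s\<lparr> ph := (ph s)(c := PD oi (ctr s) (Suc (fst (Max T)), c) v {} {}),
          ctr := Suc (ctr s),
          hist := hist s @ [PrimResp i (RTag (Max T)),
                            PrimInv (ctr s) c (PutData (Suc (fst (Max T)), c) v)] \<rparr>)"
| end_getdata: "ph s c = GD oi i R \<Longrightarrow> is_quorum C k Q \<Longrightarrow> Q \<subseteq> dom R \<Longrightarrow>
    L = (\<lambda>j. the (R j) \<inter> signed s) \<Longrightarrow>
    T = {t. k \<le> card {j \<in> Q. \<exists>e \<sigma>. (t, e, \<sigma>) \<in> L j}} \<Longrightarrow> T \<noteq> {} \<Longrightarrow>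
    w = dec {(j, e) | j e. j \<in> Q \<and> (\<exists>\<sigma>. (Max T, e, \<sigma>) \<in> L j)} \<Longrightarrow>
    step C B k \<delta> enc dec s
      (s\<lparr> ph := (ph s)(c := PD oi (ctr s) (Max T) w {} {}),
          ctr := Suc (ctr s),
          hist := hist s @ [PrimResp i (RPair (Max T) w), PrimInv (ctr s) c (PutData (Max T) w)] \<rparr>)"
| send_put: "ph s c = PD oi i t v S A \<Longrightarrow> j \<in> C \<Longrightarrow> j \<notin> S \<Longrightarrow>
    step C B k \<delta> enc dec s
      (s\<lparr> ph := (ph s)(c := PD oi i t v (insert j S) A),
          signed := insert (t, enc v j, Some c) (signed s),
          net := insert (Cl c, Fx j, PutReq i (t, enc v j, Some c)) (net s) \<rparr>)"
| end_put: "ph s c = PD oi i t v S A \<Longrightarrow> S = C \<Longrightarrow> is_quorum C k Q \<Longrightarrow> Q \<subseteq> A \<Longrightarrow>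
    step C B k \<delta> enc dec s
      (s\<lparr> ph := (ph s)(c := Idle),
          hist := hist s @ [PrimResp i RAck, OpResp oi] \<rparr>)"
| node_put: "j \<in> C \<Longrightarrow> j \<notin> B \<Longrightarrow> (src, Fx j, PutReq i x) \<in> net s \<Longrightarrow>
    step C B k \<delta> enc dec s
      (s\<lparr> net := insert (Fx j, src, PutAck i) (net s - {(src, Fx j, PutReq i x)}),
          lst := (lst s)(j := (if x \<in> signed s then add_entry \<delta> (lst s j) x else lst s j)) \<rparr>)"
| node_tag: "j \<in> C \<Longrightarrow> j \<notin> B \<Longrightarrow> (src, Fx j, TagReq i) \<in> net s \<Longrightarrow>
    x \<in> lst s j \<Longrightarrow> \<forall>y\<in>lst s j. fst y \<le> fst x \<Longrightarrow>
    step C B k \<delta> enc dec s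
      (s\<lparr> net := insert (Fx j, src, TagRep i x) (net s - {(src, Fx j, TagReq i)}) \<rparr>)"
| node_data: "j \<in> C \<Longrightarrow> j \<notin> B \<Longrightarrow> (src, Fx j, DataReq i) \<in> net s \<Longrightarrow>
    step C B k \<delta> enc dec s
      (s\<lparr> net := insert (Fx j, src, DataRep i (lst s j)) (net s - {(src, Fx j, DataReq i)}) \<rparr>)"
  \<comment> \<open>Byzantine flexnode j sends an arbitrary message (it cannot forge signatures,
      i.e. it cannot enlarge  signed, and cannot impersonate other processes)\<close>
| byz_send: "j \<in> B \<Longrightarrow>
    step C B k \<delta> enc dec s (s\<lparr> net := insert (Fx j, dst, pl) (net s) \<rparr>)"

inductive reach :: "'p set \<Rightarrow> 'p set \<Rightarrow> nat \<Rightarrow> nat \<Rightarrow> ('v \<Rightarrow> 'p \<Rightarrow> 'e) \<Rightarrow> (('p \<times> 'e) set \<Rightarrow> 'v)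
                    \<Rightarrow> 'c tag \<Rightarrow> 'v \<Rightarrow> ('p,'c::linorder,'v,'e) gstate \<Rightarrow> bool"
  for C B k \<delta> enc dec t0 v0 where
  reach_init: "reach C B k \<delta> enc dec t0 v0 (init_state C enc t0 v0)"
| reach_step: "reach C B k \<delta> enc dec t0 v0 s \<Longrightarrow> step C B k \<delta> enc dec s s'
                 \<Longrightarrow> reach C B k \<delta> enc dec t0 v0 s'"

definition op_invoked :: "('c,'v) event list \<Rightarrow> nat \<Rightarrow> bool" where
  "op_invoked h x \<longleftrightarrow> (\<exists>n c kd. n < length h \<and> h ! n = OpInv x c kd)"

definition is_read :: "('c,'v) event list \<Rightarrow> nat \<Rightarrow> bool" where
  "is_read h x \<longleftrightarrow> (\<exists>n c. n < length h \<and> h ! n = OpInv x c ReadOp)"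

definition is_write :: "('c,'v) event list \<Rightarrow> nat \<Rightarrow> bool" where
  "is_write h x \<longleftrightarrow> (\<exists>n c. n < length h \<and> h ! n = OpInv x c WriteOp)"

definition completes_before :: "('c,'v) event list \<Rightarrow> nat \<Rightarrow> nat \<Rightarrow> bool" where
  "completes_before h x y \<longleftrightarrow>
     (\<exists>n m c kd. n < m \<and> m < length h \<and> h ! n = OpResp x \<and> h ! m = OpInv y c kd)"

definition concurrent :: "('c,'v) event list \<Rightarrow> nat \<Rightarrow> nat \<Rightarrow> bool" where
  "concurrent h x y \<longleftrightarrow> op_invoked h x \<and> op_invoked h y \<and>
     \<not> completes_before h x y \<and> \<not> completes_before h y x"

definition writes_conc_bounded :: "nat \<Rightarrow> ('c,'v) event list \<Rightarrow> bool" where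
  "writes_conc_bounded \<delta> h \<longleftrightarrow>
     (\<forall>r. is_read h r \<longrightarrow> card {w. is_write h w \<and> concurrent h w r} \<le> \<delta>)"

end

theory Submission
  imports Defs
begin


definition goodT :: "nat \<Rightarrow> 'c::linorder \<Rightarrow> 'c set \<Rightarrow> bool" where
  "goodT d t G \<longleftrightarrow> t \<in> G \<or> d + 1 \<le> card {t'\<in>G. t < t'}"

definition good :: "nat \<Rightarrow> 'c::linorder tag \<Rightarrow> ('c,'e) item set \<Rightarrow> bool" where
  "good d t L \<longleftrightarrow> goodT d t (fst ` L)"

lemma tags_trim:
  "fst ` trim d L = (if d + 1 < card L then fst ` L - {Min (fst ` L)} else fst ` L)"
  by (auto simp: trim_def)

lemma finite_trim: "finite L \<Longrightarrow> finite (trim d L)"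
  by (auto simp: trim_def)

lemma trim_sub: "trim d L \<subseteq> L"
  by (auto simp: trim_def)

lemma add_entry_sub: "add_entry d L x \<subseteq> insert x L"
  using trim_sub by (auto simp: add_entry_def)

lemma finite_add_entry: "finite L \<Longrightarrow> finite (add_entry d L x)"
  using add_entry_sub by (meson finite_insert finite_subset)

lemma inj_add_entry: "inj_on fst L \<Longrightarrow> inj_on fst (add_entry d L x)"
proof -
  assume a: "inj_on fst L"
  show ?thesis
  proof (cases "\<exists>y\<in>L. fst y = fst x")
    case True then show ?thesis using a by (simp add: add_entry_def)
  next
    case False
    then have "inj_on fst (insert x L)" using a by (auto simp: inj_on_def)
    then show ?thesis using False trim_sub[of d "insert x L"] inj_on_subset
      by (simp add: add_entry_def) blast
  qed
qed

lemma goodT_trim: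
  assumes "finite G" "goodT d t G" "d + 1 < card G" 
  shows "goodT d t (G - {Min G})"
proof (cases "Min G \<le> t")
  case True
  have "{t'\<in>G. t < t'} \<subseteq> {t'\<in>G - {Min G}. t < t'}" using True by auto
  then have "card {t'\<in>G. t < t'} \<le> card {t'\<in>G - {Min G}. t < t'}"
    using assms(1) by (intro card_mono) auto
  moreover have "t \<in> G \<Longrightarrow> t \<noteq> Min G \<Longrightarrow> t \<in> G - {Min G}" by auto
  moreover have "t \<in> G \<Longrightarrow> t = Min G \<Longrightarrow> d + 1 \<le> card {t'\<in>G - {Min G}. t < t'}"
  proof -
    assume "t \<in> G" "t = Min G"
    then have "{t'\<in>G - {Min G}. t < t'} = G - {Min G}" using assms(1) Min_le by (force simp: order.strict_iff_order)
    moreover have "card (G - {Min G}) = card G - 1" using \<open>t \<in> G\<close> \<open>t = Min G\<close> assms(1) by simp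
    ultimately show ?thesis using assms(3) by simp
  qed
  ultimately show ?thesis using assms(2) unfolding goodT_def by (meson le_trans)
next
  case False
  have ne: "G \<noteq> {}" using assms(3) by auto
  then have "\<forall>g\<in>G. t < g" using False assms(1) by (meson Min_le linorder_not_le order.strict_trans2)
  then have "{t'\<in>G - {Min G}. t < t'} = G - {Min G}" by auto
  moreover have "card (G - {Min G}) = card G - 1" using ne assms(1) by simp
  ultimately have "card {t'\<in>G - {Min G}. t < t'} = card G - 1" by simp
  then show ?thesis using assms(3) unfolding goodT_def by (intro disjI2) linarith
qed

lemma good_add_entry:
  assumes "finite L" "inj_on fst L" "good d t L"
  shows "good d t (add_entry d L x)"
proof (cases "\<exists>y\<in>L. fst y = fst x")
  case True then show ?thesis using assms by (simp add: add_entry_def)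
next
  case False
  let ?L = "insert x L"
  have inj: "inj_on fst ?L" using False assms(2) by (auto simp: inj_on_def)
  have cardeq: "card (fst ` ?L) = card ?L" using card_image[OF inj] .
  have g: "goodT d t (fst ` ?L)"
  proof -
    have "{t'\<in>fst ` L. t < t'} \<subseteq> {t'\<in>fst ` ?L. t < t'}" by auto
    then have "card {t'\<in>fst ` L. t < t'} \<le> card {t'\<in>fst ` ?L. t < t'}"
      using assms(1) by (intro card_mono) auto
    then show ?thesis using assms(3) unfolding good_def goodT_def by auto
  qed
  show ?thesis
  proof (cases "d + 1 < card ?L")
    case True
    then have "fst ` trim d ?L = fst ` ?L - {Min (fst ` ?L)}" by (simp add: tags_trim)
    moreover have "goodT d t (fst ` ?L - {Min (fst ` ?L)})"
      using goodT_trim[OF _ g] True cardeq assms(1) by simp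
    ultimately show ?thesis using False by (simp add: add_entry_def good_def)
  next
    case False2: False
    then have "trim d ?L = ?L" by (simp add: trim_def)
    then show ?thesis using False g by (simp add: add_entry_def good_def)
  qed
qed

lemma good_new:
  assumes "finite L" "inj_on fst L"
  shows "good d (fst x) (add_entry d L x)"
proof (cases "\<exists>y\<in>L. fst y = fst x")
  case True
  then have "add_entry d L x = L" by (simp add: add_entry_def)
  moreover from True have "fst x \<in> fst ` L" by (metis image_eqI)
  ultimately show ?thesis by (simp add: good_def goodT_def)
next
  case False
  let ?L = "insert x L"
  have inj: "inj_on fst ?L" using False assms(2) by (auto simp: inj_on_def)
  have cardeq: "card (fst ` ?L) = card ?L" using card_image[OF inj] .
  have g: "goodT d (fst x) (fst ` ?L)" by (simp add: goodT_def)
  show ?thesis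
  proof (cases "d + 1 < card ?L")
    case True
    then have "fst ` trim d ?L = fst ` ?L - {Min (fst ` ?L)}" by (simp add: tags_trim)
    moreover have "goodT d (fst x) (fst ` ?L - {Min (fst ` ?L)})"
      using goodT_trim[OF _ g] True cardeq assms(1) by simp
    ultimately show ?thesis using False by (simp add: add_entry_def good_def)
  next
    case False2: False
    then have "trim d ?L = ?L" by (simp add: trim_def)
    then show ?thesis using False g by (simp add: add_entry_def good_def)
  qed
qed

lemma good_ex:
  assumes "finite L" "good d t L"
  shows "\<exists>y\<in>L. t \<le> fst y"
proof -
  { assume "t \<notin> fst ` L"
    then have "d + 1 \<le> card {t'\<in>fst ` L. t < t'}" using assms(2) by (simp add: good_def goodT_def)
    then have "card {t'\<in>fst ` L. t < t'} \<noteq> 0" by linarith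
    then have "{t'\<in>fst ` L. t < t'} \<noteq> {}" by (metis card.empty)
    then obtain t' where "t' \<in> fst ` L" "t < t'" by blast
    then have ?thesis by (force intro: less_imp_le) }
  then show ?thesis by force
qed



fun evid :: "('c,'v) event \<Rightarrow> nat" where
  "evid (OpInv x c kd) = x" | "evid (OpResp x) = x" | "evid (PrimInv x c p) = x" | "evid (PrimResp x r) = x"

definition uniqOI :: "('c,'v) event list \<Rightarrow> bool" where
  "uniqOI h \<longleftrightarrow> (\<forall>a<length h. \<forall>b<length h. \<forall>x c c' kd kd'. h!a = OpInv x c kd \<longrightarrow> h!b = OpInv x c' kd' \<longrightarrow> a = b)"
definition uniqPI :: "('c,'v) event list \<Rightarrow> bool" where
  "uniqPI h \<longleftrightarrow> (\<forall>a<length h. \<forall>b<length h. \<forall>x c c' kd kd'. h!a = PrimInv x c kd \<longrightarrow> h!b = PrimInv x c' kd' \<longrightarrow> a = b)"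
definition uniqOR :: "('c,'v) event list \<Rightarrow> bool" where
  "uniqOR h \<longleftrightarrow> (\<forall>a<length h. \<forall>b<length h. \<forall>x. h!a = OpResp x \<longrightarrow> h!b = OpResp x \<longrightarrow> a = b)"

lemma uniqOI_app:
  assumes "uniqOI h" "uniqOI E" "\<forall>x c kd c' kd'. OpInv x c kd \<in> set E \<longrightarrow> OpInv x c' kd' \<notin> set h"
  shows "uniqOI (h @ E)"
  unfolding uniqOI_def
proof (intro allI impI)
  fix a b x c c' kd kd'
  assume a: "a < length (h @ E)" "b < length (h @ E)" "(h @ E) ! a = OpInv x c kd" "(h @ E) ! b = OpInv x c' kd'"
  show "a = b"
  proof (cases "a < length h"; cases "b < length h")
    assume "a < length h" "b < length h" then show ?thesis using a assms(1) by (simp add: nth_append uniqOI_def)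
  next
    assume 1: "a < length h" "\<not> b < length h"
    then have "OpInv x c kd \<in> set h" using a by (metis nth_append nth_mem)
    moreover have "OpInv x c' kd' \<in> set E" using a 1 by (metis add_diff_inverse_nat length_append nat_add_left_cancel_less nth_append nth_mem)
    ultimately show ?thesis using assms(3) by blast
  next
    assume 1: "\<not> a < length h" "b < length h"
    then have "OpInv x c' kd' \<in> set h" using a by (metis nth_append nth_mem)
    moreover have "OpInv x c kd \<in> set E" using a 1 by (metis add_diff_inverse_nat length_append nat_add_left_cancel_less nth_append nth_mem)
    ultimately show ?thesis using assms(3) by blast
  next
    assume 1: "\<not> a < length h" "\<not> b < length h"
    then have "a - length h = b - length h" using a assms(2) unfolding uniqOI_def
      by (simp add: nth_append)
    then show ?thesis using 1 by simp
  qed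
qed

lemma uniqPI_app:
  assumes "uniqPI h" "uniqPI E" "\<forall>x c kd c' kd'. PrimInv x c kd \<in> set E \<longrightarrow> PrimInv x c' kd' \<notin> set h"
  shows "uniqPI (h @ E)"
  unfolding uniqPI_def
proof (intro allI impI)
  fix a b x c c' kd kd'
  assume a: "a < length (h @ E)" "b < length (h @ E)" "(h @ E) ! a = PrimInv x c kd" "(h @ E) ! b = PrimInv x c' kd'"
  show "a = b"
  proof (cases "a < length h"; cases "b < length h")
    assume "a < length h" "b < length h" then show ?thesis using a assms(1) by (simp add: nth_append uniqPI_def)
  next
    assume 1: "a < length h" "\<not> b < length h"
    then have "PrimInv x c kd \<in> set h" using a by (metis nth_append nth_mem)
    moreover have "PrimInv x c' kd' \<in> set E" using a 1 by (metis add_diff_inverse_nat length_append nat_add_left_cancel_less nth_append nth_mem)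
    ultimately show ?thesis using assms(3) by blast
  next
    assume 1: "\<not> a < length h" "b < length h"
    then have "PrimInv x c' kd' \<in> set h" using a by (metis nth_append nth_mem)
    moreover have "PrimInv x c kd \<in> set E" using a 1 by (metis add_diff_inverse_nat length_append nat_add_left_cancel_less nth_append nth_mem)
    ultimately show ?thesis using assms(3) by blast
  next
    assume 1: "\<not> a < length h" "\<not> b < length h"
    then have "a - length h = b - length h" using a assms(2) unfolding uniqPI_def
      by (simp add: nth_append)
    then show ?thesis using 1 by simp
  qed
qed

lemma uniqOR_app:
  assumes "uniqOR h" "uniqOR E" "\<forall>x. OpResp x \<in> set E \<longrightarrow> OpResp x \<notin> set h"
  shows "uniqOR (h @ E)"
  unfolding uniqOR_def
proof (intro allI impI)
  fix a b x
  assume a: "a < length (h @ E)" "b < length (h @ E)" "(h @ E) ! a = OpResp x" "(h @ E) ! b = OpResp x"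
  show "a = b"
  proof (cases "a < length h"; cases "b < length h")
    assume "a < length h" "b < length h" then show ?thesis using a assms(1) by (simp add: nth_append uniqOR_def)
  next
    assume 1: "a < length h" "\<not> b < length h"
    then have "OpResp x \<in> set h" using a by (metis nth_append nth_mem)
    moreover have "OpResp x \<in> set E" using a 1 by (metis add_diff_inverse_nat length_append nat_add_left_cancel_less nth_append nth_mem)
    ultimately show ?thesis using assms(3) by blast
  next
    assume 1: "\<not> a < length h" "b < length h"
    then have "OpResp x \<in> set h" using a by (metis nth_append nth_mem)
    moreover have "OpResp x \<in> set E" using a 1 by (metis add_diff_inverse_nat length_append nat_add_left_cancel_less nth_append nth_mem)
    ultimately show ?thesis using assms(3) by blast
  next
    assume 1: "\<not> a < length h" "\<not> b < length h"
    then have "a - length h = b - length h" using a assms(2) unfolding uniqOR_def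
      by (simp add: nth_append)
    then show ?thesis using 1 by simp
  qed
qed

lemma uniq2:
  "uniqOI [OpInv a c kd, PrimInv b c p]" "uniqPI [OpInv a c kd, PrimInv b c p]" "uniqOR [OpInv a c kd, PrimInv b c p]"
  "uniqOI [PrimResp a r, PrimInv b c p]" "uniqPI [PrimResp a r, PrimInv b c p]" "uniqOR [PrimResp a r, PrimInv b c p]"
  "uniqOI [PrimResp a r, OpResp b]" "uniqPI [PrimResp a r, OpResp b]" "uniqOR [PrimResp a r, OpResp b]"
  by (auto simp: uniqOI_def uniqPI_def uniqOR_def less_Suc_eq nth_Cons')

lemma uniqOI_D: "uniqOI h \<Longrightarrow> OpInv x c kd \<in> set h \<Longrightarrow> OpInv x c' kd' \<in> set h \<Longrightarrow> c = c' \<and> kd = kd'"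
  unfolding uniqOI_def in_set_conv_nth by (metis event.inject(1))

lemma uniqPI_D: "uniqPI h \<Longrightarrow> PrimInv x c kd \<in> set h \<Longrightarrow> PrimInv x c' kd' \<in> set h \<Longrightarrow> c = c' \<and> kd = kd'"
  unfolding uniqPI_def in_set_conv_nth by (metis event.inject(3))



lemma crecv_GT: "crecv P j pl = GT oi i v R' \<Longrightarrow> \<exists>R. P = GT oi i v R \<and> (R' = R \<or> (\<exists>x. pl = TagRep i x \<and> R j = None \<and> R' = R(j \<mapsto> x)))"
  by (cases P; cases pl) (auto simp: crecv_def split: if_splits)
lemma crecv_GD: "crecv P j pl = GD oi i R' \<Longrightarrow> \<exists>R. P = GD oi i R \<and> (R' = R \<or> (\<exists>X. pl = DataRep i X \<and> R j = None \<and> R' = R(j \<mapsto> X)))"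
  by (cases P; cases pl) (auto simp: crecv_def split: if_splits)
lemma crecv_PD: "crecv P j pl = PD oi i t v S A' \<Longrightarrow> \<exists>A. P = PD oi i t v S A \<and> (A' = A \<or> (pl = PutAck i \<and> A' = insert j A))"
  by (cases P; cases pl) (auto simp: crecv_def split: if_splits)
lemma crecv_Idle: "crecv P j pl = Idle \<Longrightarrow> P = Idle"
  by (cases P; cases pl) (auto simp: crecv_def split: if_splits)

locale proto =
  fixes C B :: "'p set" and k \<delta> :: nat and enc :: "'v \<Rightarrow> 'p \<Rightarrow> 'e"
    and dec :: "('p \<times> 'e) set \<Rightarrow> 'v" and t0 :: "nat \<times> 'c::linorder" and v0 :: 'v
begin

abbreviation "rch \<equiv> reach C B k \<delta> enc dec t0 v0"
abbreviation "stp \<equiv> step C B k \<delta> enc dec"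

fun opof :: "('c,'p,'v,'e) phase \<Rightarrow> nat option" where
  "opof Idle = None" | "opof (GT oi i v R) = Some oi" | "opof (GD oi i R) = Some oi" | "opof (PD oi i t v S A) = Some oi"

fun phA :: "('c,'v) event list \<Rightarrow> 'c \<Rightarrow> ('c,'p,'v,'e) phase \<Rightarrow> bool" where
  "phA h c Idle = True"
| "phA h c (GT oi i v R) = (OpInv oi c WriteOp \<in> set h \<and> OpResp oi \<notin> set h \<and> PrimInv i c GetTag \<in> set h)"
| "phA h c (GD oi i R) = ((\<exists>m. Suc m < length h \<and> h ! m = OpInv oi c ReadOp \<and> h ! Suc m = PrimInv i c GetData) \<and> OpResp oi \<notin> set h)"
| "phA h c (PD oi i t v S A) = ((\<exists>kd. OpInv oi c kd \<in> set h) \<and> OpResp oi \<notin> set h \<and> PrimInv i c (PutData t v) \<in> set h)"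

lemma phA_mono: "phA h c P \<Longrightarrow> (\<And>x. OpResp x \<in> set E \<Longrightarrow> opof P \<noteq> Some x) \<Longrightarrow> phA (h @ E) c P"
  apply (cases P)
  apply (auto simp: nth_append)
  done

fun msgA :: "nat \<Rightarrow> ('c,'p,'e) msg \<Rightarrow> bool" where
  "msgA n (Cl c, Fx j, TagReq i) = (i < n)"
| "msgA n (Cl c, Fx j, DataReq i) = (i < n)"
| "msgA n (Fx j, Cl c, TagRep i x) = (j \<notin> B \<longrightarrow> i < n)"
| "msgA n (Fx j, Cl c, DataRep i X) = (j \<notin> B \<longrightarrow> i < n)"
| "msgA n _ = True"

lemma msgA_mono: "msgA n m \<Longrightarrow> n \<le> n' \<Longrightarrow> msgA n' m"
  by (induction n m rule: msgA.induct) auto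

lemma phA_crecv: "phA h c P \<Longrightarrow> phA h c (crecv P j pl)"
  by (cases P; cases pl) (auto simp: crecv_def)

lemma phA_opof: "phA h c P \<Longrightarrow> opof P = Some x \<Longrightarrow> \<exists>kd. OpInv x c kd \<in> set h"
  by (cases P) (auto, metis Suc_lessD nth_mem)

definition invA :: "('p,'c,'v,'e) gstate \<Rightarrow> bool" where
"invA s \<longleftrightarrow>
 (\<forall>e\<in>set (hist s). evid e < ctr s) \<and> uniqOI (hist s) \<and> uniqPI (hist s) \<and> uniqOR (hist s) \<and>
 (\<forall>c. phA (hist s) c (ph s c)) \<and> (\<forall>m\<in>net s. msgA (ctr s) m)"

lemma invA_init: "invA (init_state C enc t0 v0)"
  by (simp add: invA_def init_state_def uniqOI_def uniqPI_def uniqOR_def)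

lemma invA_step:
  assumes I: "invA s" and st: "stp s s'"
  shows "invA s'"
proof -
  have ids: "\<forall>e\<in>set (hist s). evid e < ctr s" and U1: "uniqOI (hist s)" and U2: "uniqPI (hist s)"
    and U3: "uniqOR (hist s)" and P: "\<And>c. phA (hist s) c (ph s c)" and M: "\<And>m. m \<in> net s \<Longrightarrow> msgA (ctr s) m"
    using I unfolding invA_def by auto
  have oi_lt: "\<And>x c kd. OpInv x c kd \<in> set (hist s) \<Longrightarrow> x < ctr s" using ids by force
  have pi_lt: "\<And>x c kd. PrimInv x c kd \<in> set (hist s) \<Longrightarrow> x < ctr s" using ids by force
  have or_lt: "\<And>x. OpResp x \<in> set (hist s) \<Longrightarrow> x < ctr s" using ids by force
  show ?thesis using st
  proof (cases rule: step.cases)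
    case (inv_write c v)
    have e: "hist s' = hist s @ [OpInv (ctr s) c WriteOp, PrimInv (Suc (ctr s)) c GetTag]"
      "ctr s' = ctr s + 2" "ph s' = (ph s)(c := GT (ctr s) (Suc (ctr s)) v Map.empty)"
      "net s' = net s \<union> {(Cl c, Fx j, TagReq (Suc (ctr s))) |j. j \<in> C}" using inv_write by simp_all
    show ?thesis unfolding invA_def e
    proof (intro conjI allI ballI)
      show "uniqOI (hist s @ [OpInv (ctr s) c WriteOp, PrimInv (Suc (ctr s)) c GetTag])"
        using oi_lt by (intro uniqOI_app U1 uniq2) auto
      show "uniqPI (hist s @ [OpInv (ctr s) c WriteOp, PrimInv (Suc (ctr s)) c GetTag])"
        using pi_lt by (intro uniqPI_app U2 uniq2) fastforce
      show "uniqOR (hist s @ [OpInv (ctr s) c WriteOp, PrimInv (Suc (ctr s)) c GetTag])"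
        by (intro uniqOR_app U3 uniq2) auto
      fix c' show "phA (hist s @ [OpInv (ctr s) c WriteOp, PrimInv (Suc (ctr s)) c GetTag]) c' (((ph s)(c := GT (ctr s) (Suc (ctr s)) v Map.empty)) c')"
        using P[of c'] or_lt by (cases "c' = c") (auto intro: phA_mono)
    next
      fix m assume "m \<in> net s \<union> {(Cl c, Fx j, TagReq (Suc (ctr s))) |j. j \<in> C}"
      then show "msgA (ctr s + 2) m" using M msgA_mono by fastforce
    qed (use ids in auto)
  next
    case (inv_read c)
    have e: "hist s' = hist s @ [OpInv (ctr s) c ReadOp, PrimInv (Suc (ctr s)) c GetData]"
      "ctr s' = ctr s + 2" "ph s' = (ph s)(c := GD (ctr s) (Suc (ctr s)) Map.empty)"
      "net s' = net s \<union> {(Cl c, Fx j, DataReq (Suc (ctr s))) |j. j \<in> C}" using inv_read by simp_all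
    show ?thesis unfolding invA_def e
    proof (intro conjI allI ballI)
      show "uniqOI (hist s @ [OpInv (ctr s) c ReadOp, PrimInv (Suc (ctr s)) c GetData])"
        using oi_lt by (intro uniqOI_app U1 uniq2) auto
      show "uniqPI (hist s @ [OpInv (ctr s) c ReadOp, PrimInv (Suc (ctr s)) c GetData])"
        using pi_lt by (intro uniqPI_app U2 uniq2) fastforce
      show "uniqOR (hist s @ [OpInv (ctr s) c ReadOp, PrimInv (Suc (ctr s)) c GetData])"
        by (intro uniqOR_app U3 uniq2) auto
      fix c' show "phA (hist s @ [OpInv (ctr s) c ReadOp, PrimInv (Suc (ctr s)) c GetData]) c' (((ph s)(c := GD (ctr s) (Suc (ctr s)) Map.empty)) c')"
        using P[of c'] or_lt by (cases "c' = c") (auto intro!: phA_mono exI[of _ "length (hist s)"] simp: nth_append)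
    next
      fix m assume "m \<in> net s \<union> {(Cl c, Fx j, DataReq (Suc (ctr s))) |j. j \<in> C}"
      then show "msgA (ctr s + 2) m" using M msgA_mono by fastforce
    qed (use ids in auto)
  next
    case (client_recv j c pl)
    have e: "hist s' = hist s" "ctr s' = ctr s" "ph s' = (ph s)(c := crecv (ph s c) j pl)"
      "net s' = net s - {(Fx j, Cl c, pl)}" using client_recv by simp_all
    show ?thesis unfolding invA_def e using ids U1 U2 U3 M P phA_crecv by auto
  next
    case (end_gettag c oi i v R Q T)
    have e: "hist s' = hist s @ [PrimResp i (RTag (Max T)), PrimInv (ctr s) c (PutData (Suc (fst (Max T)), c) v)]"
      "ctr s' = Suc (ctr s)" "ph s' = (ph s)(c := PD oi (ctr s) (Suc (fst (Max T)), c) v {} {})"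
      "net s' = net s" using end_gettag by simp_all
    have pc: "phA (hist s) c (GT oi i v R)" using P[of c] end_gettag by simp
    show ?thesis unfolding invA_def e
    proof (intro conjI allI ballI)
      show "uniqOI (hist s @ [PrimResp i (RTag (Max T)), PrimInv (ctr s) c (PutData (Suc (fst (Max T)), c) v)])"
        by (intro uniqOI_app U1 uniq2) auto
      show "uniqPI (hist s @ [PrimResp i (RTag (Max T)), PrimInv (ctr s) c (PutData (Suc (fst (Max T)), c) v)])"
        using pi_lt by (intro uniqPI_app U2 uniq2) fastforce
      show "uniqOR (hist s @ [PrimResp i (RTag (Max T)), PrimInv (ctr s) c (PutData (Suc (fst (Max T)), c) v)])"
        by (intro uniqOR_app U3 uniq2) auto
      fix c' show "phA (hist s @ [PrimResp i (RTag (Max T)), PrimInv (ctr s) c (PutData (Suc (fst (Max T)), c) v)]) c' (((ph s)(c := PD oi (ctr s) (Suc (fst (Max T)), c) v {} {})) c')"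
        using P[of c'] pc by (cases "c' = c") (auto intro: phA_mono)
    next
      fix m assume "m \<in> net s"
      then show "msgA (Suc (ctr s)) m" using M msgA_mono by fastforce
    next
      fix e assume "e \<in> set (hist s @ [PrimResp i (RTag (Max T)), PrimInv (ctr s) c (PutData (Suc (fst (Max T)), c) v)])"
      then show "evid e < Suc (ctr s)" using ids pc pi_lt by (auto simp: less_Suc_eq)
    qed
  next
    case (end_getdata c oi i R Q L T w)
    have e: "hist s' = hist s @ [PrimResp i (RPair (Max T) w), PrimInv (ctr s) c (PutData (Max T) w)]"
      "ctr s' = Suc (ctr s)" "ph s' = (ph s)(c := PD oi (ctr s) (Max T) w {} {})"
      "net s' = net s" using end_getdata by simp_all
    have pc: "phA (hist s) c (GD oi i R)" using P[of c] end_getdata by simp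
    then obtain m where m: "Suc m < length (hist s)" "hist s ! m = OpInv oi c ReadOp" "hist s ! Suc m = PrimInv i c GetData"
      by auto
    have iin: "PrimInv i c GetData \<in> set (hist s)" "OpInv oi c ReadOp \<in> set (hist s)" using m
      by (metis Suc_lessD nth_mem)+
    show ?thesis unfolding invA_def e
    proof (intro conjI allI ballI)
      show "uniqOI (hist s @ [PrimResp i (RPair (Max T) w), PrimInv (ctr s) c (PutData (Max T) w)])"
        by (intro uniqOI_app U1 uniq2) auto
      show "uniqPI (hist s @ [PrimResp i (RPair (Max T) w), PrimInv (ctr s) c (PutData (Max T) w)])"
        using pi_lt by (intro uniqPI_app U2 uniq2) fastforce
      show "uniqOR (hist s @ [PrimResp i (RPair (Max T) w), PrimInv (ctr s) c (PutData (Max T) w)])"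
        by (intro uniqOR_app U3 uniq2) auto
      fix c' show "phA (hist s @ [PrimResp i (RPair (Max T) w), PrimInv (ctr s) c (PutData (Max T) w)]) c' (((ph s)(c := PD oi (ctr s) (Max T) w {} {})) c')"
        using P[of c'] pc iin by (cases "c' = c") (auto intro: phA_mono)
    next
      fix m assume "m \<in> net s"
      then show "msgA (Suc (ctr s)) m" using M msgA_mono by fastforce
    next
      fix e assume "e \<in> set (hist s @ [PrimResp i (RPair (Max T) w), PrimInv (ctr s) c (PutData (Max T) w)])"
      then show "evid e < Suc (ctr s)" using ids iin pi_lt by (auto simp: less_Suc_eq)
    qed
  next
    case (send_put c oi i t v S A j)
    have e: "hist s' = hist s" "ctr s' = ctr s" "ph s' = (ph s)(c := PD oi i t v (insert j S) A)"
      "net s' = insert (Cl c, Fx j, PutReq i (t, enc v j, Some c)) (net s)" using send_put by simp_all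
    have pc: "phA (hist s) c (PD oi i t v S A)" using P[of c] send_put by simp
    show ?thesis unfolding invA_def e using ids U1 U2 U3 M P pc by auto
  next
    case (end_put c oi i t v S A Q)
    have e: "hist s' = hist s @ [PrimResp i RAck, OpResp oi]" "ctr s' = ctr s" "ph s' = (ph s)(c := Idle)"
      "net s' = net s" using end_put by simp_all
    have pc: "phA (hist s) c (PD oi i t v S A)" using P[of c] end_put by simp
    then obtain kd where kd: "OpInv oi c kd \<in> set (hist s)" "OpResp oi \<notin> set (hist s)" "PrimInv i c (PutData t v) \<in> set (hist s)" by auto
    show ?thesis unfolding invA_def e
    proof (intro conjI allI ballI)
      show "uniqOI (hist s @ [PrimResp i RAck, OpResp oi])"
        by (intro uniqOI_app U1 uniq2) auto
      show "uniqPI (hist s @ [PrimResp i RAck, OpResp oi])"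
        by (intro uniqPI_app U2 uniq2) auto
      show "uniqOR (hist s @ [PrimResp i RAck, OpResp oi])"
        using kd by (intro uniqOR_app U3 uniq2) auto
      fix c' show "phA (hist s @ [PrimResp i RAck, OpResp oi]) c' (((ph s)(c := Idle)) c')"
      proof (cases "c' = c")
        case False
        have "opof (ph s c') \<noteq> Some oi"
        proof
          assume "opof (ph s c') = Some oi"
          then obtain kd' where kd': "OpInv oi c' kd' \<in> set (hist s)" using phA_opof P by blast
          then show False using uniqOI_D[OF U1 kd' kd(1)] False by simp
        qed
        then show ?thesis using False P[of c'] by (auto intro: phA_mono)
      qed simp
    next
      fix m assume "m \<in> net s"
      then show "msgA (ctr s) m" using M by fastforce
    next
      fix e assume "e \<in> set (hist s @ [PrimResp i RAck, OpResp oi])"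
      then show "evid e < ctr s" using ids kd pi_lt oi_lt by auto
    qed
  next
    case (node_put j src i x)
    have e: "hist s' = hist s" "ctr s' = ctr s" "ph s' = ph s"
      "net s' = insert (Fx j, src, PutAck i) (net s - {(src, Fx j, PutReq i x)})" using node_put by simp_all
    have "msgA (ctr s) (Fx j, src, PutAck i)" by (cases src) auto
    then show ?thesis unfolding invA_def e using ids U1 U2 U3 M P by auto
  next
    case (node_tag j src i x)
    have e: "hist s' = hist s" "ctr s' = ctr s" "ph s' = ph s"
      "net s' = insert (Fx j, src, TagRep i x) (net s - {(src, Fx j, TagReq i)})" using node_tag by simp_all
    have "msgA (ctr s) (Fx j, src, TagRep i x)" using M[OF node_tag(4)] by (cases src) auto
    then show ?thesis unfolding invA_def e using ids U1 U2 U3 M P by auto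
  next
    case (node_data j src i)
    have e: "hist s' = hist s" "ctr s' = ctr s" "ph s' = ph s"
      "net s' = insert (Fx j, src, DataRep i (lst s j)) (net s - {(src, Fx j, DataReq i)})" using node_data by simp_all
    have "msgA (ctr s) (Fx j, src, DataRep i (lst s j))" using M[OF node_data(4)] by (cases src) auto
    then show ?thesis unfolding invA_def e using ids U1 U2 U3 M P by auto
  next
    case (byz_send j dst pl)
    have e: "hist s' = hist s" "ctr s' = ctr s" "ph s' = ph s"
      "net s' = insert (Fx j, dst, pl) (net s)" using byz_send by simp_all
    have "msgA (ctr s) (Fx j, dst, pl)" using byz_send(2) by (cases dst; cases pl) auto
    then show ?thesis unfolding invA_def e using ids U1 U2 U3 M P by auto
  qed
qed

lemma invA_reach: "rch s \<Longrightarrow> invA s"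
  by (induction rule: reach.induct) (auto intro: invA_init invA_step)

end


context proto begin

definition WrW :: "('p,'c,'v,'e) gstate \<Rightarrow> 'c tag \<Rightarrow> nat \<Rightarrow> bool" where
  "WrW s t w \<longleftrightarrow> (\<exists>c. OpInv w c WriteOp \<in> set (hist s) \<and>
     ((\<exists>i v S A. ph s c = PD w i t v S A \<and> OpResp w \<notin> set (hist s)) \<or>
      (\<exists>n i v. Suc n < length (hist s) \<and> hist s ! n = PrimResp i RAck \<and> hist s ! Suc n = OpResp w \<and>
               PrimInv i c (PutData t v) \<in> set (hist s))))"

lemma WrW_gen:
  assumes "WrW s t w" "hist s' = hist s @ E"
    "\<And>c i v S A. ph s c = PD w i t v S A \<Longrightarrow> OpInv w c WriteOp \<in> set (hist s) \<Longrightarrow> OpResp w \<notin> set (hist s) \<Longrightarrow>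
        (\<exists>i v S A. ph s' c = PD w i t v S A) \<and> OpResp w \<notin> set E"
  shows "WrW s' t w"
proof -
  obtain c where c: "OpInv w c WriteOp \<in> set (hist s)"
    "(\<exists>i v S A. ph s c = PD w i t v S A \<and> OpResp w \<notin> set (hist s)) \<or>
      (\<exists>n i v. Suc n < length (hist s) \<and> hist s ! n = PrimResp i RAck \<and> hist s ! Suc n = OpResp w \<and>
               PrimInv i c (PutData t v) \<in> set (hist s))" using assms(1) unfolding WrW_def by blast
  from c(2) show ?thesis
  proof
    assume "\<exists>i v S A. ph s c = PD w i t v S A \<and> OpResp w \<notin> set (hist s)"
    then obtain i v S A where "ph s c = PD w i t v S A" "OpResp w \<notin> set (hist s)" by blast
    from assms(3)[OF this(1) c(1) this(2)] this(2) c(1) show ?thesis unfolding WrW_def assms(2) by auto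
  next
    assume "\<exists>n i v. Suc n < length (hist s) \<and> hist s ! n = PrimResp i RAck \<and> hist s ! Suc n = OpResp w \<and>
               PrimInv i c (PutData t v) \<in> set (hist s)"
    then obtain n i v where "Suc n < length (hist s)" "hist s ! n = PrimResp i RAck" "hist s ! Suc n = OpResp w"
      "PrimInv i c (PutData t v) \<in> set (hist s)" by blast
    then show ?thesis using c(1) unfolding WrW_def assms(2)
      by (intro exI[of _ c] conjI disjI2 exI[of _ n] exI[of _ i] exI[of _ v]) (auto simp: nth_append)
  qed
qed

lemma WrW_step:
  assumes I: "invA s" and st: "stp s s'" and W: "WrW s t w"
  shows "WrW s' t w"
proof -
  have U1: "uniqOI (hist s)" and P: "\<And>c. phA (hist s) c (ph s c)" using I unfolding invA_def by auto
  show ?thesis using st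
  proof (cases rule: step.cases)
    case (inv_write c v)
    show ?thesis by (rule WrW_gen[OF W, of _ "[OpInv (ctr s) c WriteOp, PrimInv (Suc (ctr s)) c GetTag]"])
      (use inv_write in auto)
  next
    case (inv_read c)
    show ?thesis by (rule WrW_gen[OF W, of _ "[OpInv (ctr s) c ReadOp, PrimInv (Suc (ctr s)) c GetData]"])
      (use inv_read in auto)
  next
    case (client_recv j c pl)
    show ?thesis
    proof (rule WrW_gen[OF W, of _ "[]"])
      fix c' i v S A assume "ph s c' = PD w i t v S A"
      then show "(\<exists>i v S A. ph s' c' = PD w i t v S A) \<and> OpResp w \<notin> set []"
        using client_recv by (cases "c' = c") (auto simp: crecv_def split: payload.split)
    qed (use client_recv in auto)
  next
    case (end_gettag c oi i v R Q T)
    show ?thesis by (rule WrW_gen[OF W, of _ "[PrimResp i (RTag (Max T)), PrimInv (ctr s) c (PutData (Suc (fst (Max T)), c) v)]"])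
      (use end_gettag in auto)
  next
    case (end_getdata c oi i R Q L T w')
    show ?thesis by (rule WrW_gen[OF W, of _ "[PrimResp i (RPair (Max T) w'), PrimInv (ctr s) c (PutData (Max T) w')]"])
      (use end_getdata in auto)
  next
    case (send_put c oi i t' v S A j)
    show ?thesis by (rule WrW_gen[OF W, of _ "[]"]) (use send_put in auto)
  next
    case (end_put c oi i t' v S A Q)
    have pc: "phA (hist s) c (PD oi i t' v S A)" using P[of c] end_put by simp
    then obtain kd where kd: "OpInv oi c kd \<in> set (hist s)" "OpResp oi \<notin> set (hist s)" "PrimInv i c (PutData t' v) \<in> set (hist s)" by auto
    show ?thesis
    proof (cases "\<exists>i v S A. ph s c = PD w i t v S A")
      case True
      then have "w = oi" "t = t'" using end_put by auto
      have "OpInv oi c WriteOp \<in> set (hist s)"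
      proof -
        obtain c1 where c1: "OpInv w c1 WriteOp \<in> set (hist s)"
          "(\<exists>i v S A. ph s c1 = PD w i t v S A \<and> OpResp w \<notin> set (hist s)) \<or>
           (\<exists>n i v. Suc n < length (hist s) \<and> hist s ! n = PrimResp i RAck \<and> hist s ! Suc n = OpResp w \<and>
               PrimInv i c1 (PutData t v) \<in> set (hist s))" using W unfolding WrW_def by blast
        have "c1 = c" "kd = WriteOp" using uniqOI_D[OF U1 c1(1)[unfolded \<open>w = oi\<close>] kd(1)] by auto
        then show ?thesis using c1 \<open>w = oi\<close> by simp
      qed
      then show ?thesis unfolding WrW_def using end_put kd \<open>w = oi\<close> \<open>t = t'\<close>
        by (intro exI[of _ c] conjI disjI2 exI[of _ "length (hist s)"] exI[of _ i] exI[of _ v]) (auto simp: nth_append)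
    next
      case False
      show ?thesis
      proof (rule WrW_gen[OF W, of _ "[PrimResp i RAck, OpResp oi]"])
        fix c' i' v' S' A' assume a: "ph s c' = PD w i' t v' S' A'" "OpInv w c' WriteOp \<in> set (hist s)"
        then have "c' \<noteq> c" using False by auto
        moreover have "w \<noteq> oi"
        proof
          assume "w = oi"
          then show False using uniqOI_D[OF U1 a(2)[unfolded \<open>w = oi\<close>] kd(1)] \<open>c' \<noteq> c\<close> by auto
        qed
        ultimately show "(\<exists>i v S A. ph s' c' = PD w i t v S A) \<and> OpResp w \<notin> set [PrimResp i RAck, OpResp oi]"
          using a end_put by auto
      qed (use end_put in auto)
    qed
  next
    case (node_put j src i x)
    show ?thesis by (rule WrW_gen[OF W, of _ "[]"]) (use node_put in auto)
  next
    case (node_tag j src i x)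
    show ?thesis by (rule WrW_gen[OF W, of _ "[]"]) (use node_tag in auto)
  next
    case (node_data j src i)
    show ?thesis by (rule WrW_gen[OF W, of _ "[]"]) (use node_data in auto)
  next
    case (byz_send j dst pl)
    show ?thesis by (rule WrW_gen[OF W, of _ "[]"]) (use byz_send in auto)
  qed
qed

end


context proto begin

definition tagok :: "('p,'c,'v,'e) gstate \<Rightarrow> 'c tag \<Rightarrow> bool" where
  "tagok s t \<longleftrightarrow> t0 \<le> t \<and> (t = t0 \<or> (\<exists>w. WrW s t w))"

lemma tagok_step: "invA s \<Longrightarrow> stp s s' \<Longrightarrow> tagok s t \<Longrightarrow> tagok s' t"
  unfolding tagok_def using WrW_step by blast

fun phB :: "('p,'c,'v,'e) gstate \<Rightarrow> ('c,'p,'v,'e) phase \<Rightarrow> bool" where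
  "phB s Idle = True"
| "phB s (GT oi i v R) = (\<forall>j x. j \<in> C \<longrightarrow> j \<notin> B \<longrightarrow> R j = Some x \<longrightarrow> x \<in> signed s)"
| "phB s (GD oi i R) = (\<forall>j X. j \<in> C \<longrightarrow> j \<notin> B \<longrightarrow> R j = Some X \<longrightarrow> X \<subseteq> signed s \<and> finite X)"
| "phB s (PD oi i t v S A) = tagok s t"

fun msgB :: "('p,'c,'v,'e) gstate \<Rightarrow> ('c,'p,'e) msg \<Rightarrow> bool" where
  "msgB s (Cl c, Fx j, PutReq i x) = (x \<in> signed s \<and> (\<exists>v. PrimInv i c (PutData (fst x) v) \<in> set (hist s)))"
| "msgB s (Fx j, Cl c, TagRep i x) = (j \<in> C \<longrightarrow> j \<notin> B \<longrightarrow> x \<in> signed s)"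
| "msgB s (Fx j, Cl c, DataRep i X) = (j \<in> C \<longrightarrow> j \<notin> B \<longrightarrow> X \<subseteq> signed s \<and> finite X)"
| "msgB s _ = True"

lemma phB_mono: "phB s P \<Longrightarrow> signed s \<subseteq> signed s' \<Longrightarrow> (\<And>t. tagok s t \<Longrightarrow> tagok s' t) \<Longrightarrow> phB s' P"
  by (cases P) auto

lemma msgB_mono: "msgB s m \<Longrightarrow> signed s \<subseteq> signed s' \<Longrightarrow> set (hist s) \<subseteq> set (hist s') \<Longrightarrow> msgB s' m"
  by (induction s m rule: msgB.induct) auto

definition invB :: "('p,'c,'v,'e) gstate \<Rightarrow> bool" where
"invB s \<longleftrightarrow> finite (signed s) \<and> (\<forall>x\<in>signed s. tagok s (fst x)) \<and>
  (\<forall>j\<in>C. finite (lst s j) \<and> inj_on fst (lst s j) \<and> lst s j \<subseteq> signed s) \<and>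
  (\<forall>i c t v. PrimInv i c (PutData t v) \<in> set (hist s) \<longrightarrow> t0 \<le> t) \<and>
  (\<forall>c. phB s (ph s c)) \<and> (\<forall>m\<in>net s. msgB s m)"

end

locale proto2 = proto C B k \<delta> enc dec t0 v0 for C B :: "'p set" and k \<delta> :: nat and enc :: "'v \<Rightarrow> 'p \<Rightarrow> 'e"
    and dec :: "('p \<times> 'e) set \<Rightarrow> 'v" and t0 :: "nat \<times> 'c::linorder" and v0 :: 'v +
  assumes finC: "finite C" and k1: "1 \<le> k"
begin

lemma invB_init: "invB (init_state C enc t0 v0)"
proof -
  have "{(t0, enc v0 j, None) | j. j \<in> C} = (\<lambda>j. (t0, enc v0 j, None)) ` C" by auto
  then have "finite {(t0, enc v0 j, None) | j. j \<in> C}" using finC by simp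
  then show ?thesis by (auto simp: invB_def init_state_def tagok_def)
qed

lemma T_sub:
  assumes "T = {t. k \<le> card {j \<in> Q. \<exists>e \<sigma>. (t, e, \<sigma>) \<in> L j}}" "\<And>j. L j \<subseteq> X"
  shows "T \<subseteq> fst ` X"
proof
  fix t assume "t \<in> T"
  then have "k \<le> card {j \<in> Q. \<exists>e \<sigma>. (t, e, \<sigma>) \<in> L j}" using assms(1) by simp
  then have "{j \<in> Q. \<exists>e \<sigma>. (t, e, \<sigma>) \<in> L j} \<noteq> {}" using k1 by (metis card.empty le_zero_eq one_neq_zero)
  then obtain j e \<sigma> where "(t, e, \<sigma>) \<in> L j" by blast
  then show "t \<in> fst ` X" using assms(2) by force
qed

lemma invB_step:
  assumes IA: "invA s" and I: "invB s" and st: "stp s s'"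
  shows "invB s'"
proof -
  have fs: "finite (signed s)" and sg: "\<And>x. x \<in> signed s \<Longrightarrow> tagok s (fst x)"
    and L: "\<And>j. j \<in> C \<Longrightarrow> finite (lst s j) \<and> inj_on fst (lst s j) \<and> lst s j \<subseteq> signed s"
    and H: "\<And>i c t v. PrimInv i c (PutData t v) \<in> set (hist s) \<Longrightarrow> t0 \<le> t"
    and P: "\<And>c. phB s (ph s c)" and M: "\<And>m. m \<in> net s \<Longrightarrow> msgB s m"
    using I unfolding invB_def by blast+
  have PA: "\<And>c. phA (hist s) c (ph s c)" using IA unfolding invA_def by auto
  have tg: "\<And>t. tagok s t \<Longrightarrow> tagok s' t" using tagok_step[OF IA st] .
  show ?thesis using st
  proof (cases rule: step.cases)
    case (inv_write c v)
    have e: "hist s' = hist s @ [OpInv (ctr s) c WriteOp, PrimInv (Suc (ctr s)) c GetTag]"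
      "signed s' = signed s" "lst s' = lst s" "ph s' = (ph s)(c := GT (ctr s) (Suc (ctr s)) v Map.empty)"
      "net s' = net s \<union> {(Cl c, Fx j, TagReq (Suc (ctr s))) |j. j \<in> C}" using inv_write by simp_all
    show ?thesis unfolding invB_def e
    proof (intro conjI allI ballI impI)
      fix c' show "phB s' (((ph s)(c := GT (ctr s) (Suc (ctr s)) v Map.empty)) c')"
        using P[of c'] tg e by (cases "c' = c") (auto intro: phB_mono)
    next
      fix m assume mm: "m \<in> net s \<union> {(Cl c, Fx j, TagReq (Suc (ctr s))) |j. j \<in> C}"
      have Mm: "\<And>m. m \<in> net s \<Longrightarrow> msgB s' m" by (rule msgB_mono[OF M]) (auto simp: e)
      show "msgB s' m" using mm Mm[of m] by auto
    qed (use fs sg tg L H in auto)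
  next
    case (inv_read c)
    have e: "hist s' = hist s @ [OpInv (ctr s) c ReadOp, PrimInv (Suc (ctr s)) c GetData]"
      "signed s' = signed s" "lst s' = lst s" "ph s' = (ph s)(c := GD (ctr s) (Suc (ctr s)) Map.empty)"
      "net s' = net s \<union> {(Cl c, Fx j, DataReq (Suc (ctr s))) |j. j \<in> C}" using inv_read by simp_all
    show ?thesis unfolding invB_def e
    proof (intro conjI allI ballI impI)
      fix c' show "phB s' (((ph s)(c := GD (ctr s) (Suc (ctr s)) Map.empty)) c')"
        using P[of c'] tg e by (cases "c' = c") (auto intro: phB_mono)
    next
      fix m assume mm: "m \<in> net s \<union> {(Cl c, Fx j, DataReq (Suc (ctr s))) |j. j \<in> C}"
      have Mm: "\<And>m. m \<in> net s \<Longrightarrow> msgB s' m" by (rule msgB_mono[OF M]) (auto simp: e)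
      show "msgB s' m" using mm Mm[of m] by auto
    qed (use fs sg tg L H in auto)
  next
    case (client_recv j c pl)
    have e: "hist s' = hist s" "signed s' = signed s" "lst s' = lst s" "ph s' = (ph s)(c := crecv (ph s c) j pl)"
      "net s' = net s - {(Fx j, Cl c, pl)}" using client_recv by simp_all
    have mc: "msgB s (Fx j, Cl c, pl)" using M client_recv(2) by blast
    have pc: "phB s' (crecv (ph s c) j pl)"
    proof (cases "ph s c")
      case Idle then show ?thesis by (simp add: crecv_def)
    next
      case (GT oi i v R)
      then show ?thesis using P[of c] mc client_recv(3) e by (cases pl) (auto simp: crecv_def)
    next
      case (GD oi i R)
      then show ?thesis using P[of c] mc client_recv(3) e by (cases pl) (auto simp: crecv_def)
    next
      case (PD oi i t v S A)
      then show ?thesis using P[of c] tg by (cases pl) (auto simp: crecv_def)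
    qed
    show ?thesis unfolding invB_def e
    proof (intro conjI allI ballI impI)
      fix c' show "phB s' (((ph s)(c := crecv (ph s c) j pl)) c')"
        using P[of c'] tg e pc by (cases "c' = c") (auto intro: phB_mono)
    next
      fix m assume mm: "m \<in> net s - {(Fx j, Cl c, pl)}"
      have Mm: "\<And>m. m \<in> net s \<Longrightarrow> msgB s' m" by (rule msgB_mono[OF M]) (auto simp: e)
      show "msgB s' m" using mm Mm[of m] by auto
    qed (use fs sg tg L H in auto)
  next
    case (end_gettag c oi i v R Q T)
    let ?tn = "(Suc (fst (Max T)), c)"
    have e: "hist s' = hist s @ [PrimResp i (RTag (Max T)), PrimInv (ctr s) c (PutData ?tn v)]"
      "signed s' = signed s" "lst s' = lst s" "ph s' = (ph s)(c := PD oi (ctr s) ?tn v {} {})"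
      "net s' = net s" using end_gettag by simp_all
    have "T \<subseteq> fst ` signed s"
    proof
      fix t assume "t \<in> T"
      then obtain x where "t = fst x" "x \<in> signed s" using end_gettag(5) by blast
      then show "t \<in> fst ` signed s" by blast
    qed
    then have "finite T" using fs finite_subset by blast
    then have "Max T \<in> T" using end_gettag(6) by simp
    then have "Max T \<in> fst ` signed s" using \<open>T \<subseteq> fst ` signed s\<close> by blast
    then have "t0 \<le> Max T" using sg unfolding tagok_def by force
    then have lt: "t0 \<le> ?tn" by (auto simp add: less_eq_prod_def less_prod_def)
    have pa: "phA (hist s) c (GT oi i v R)" using PA[of c] end_gettag by simp
    have "WrW s' ?tn oi" unfolding WrW_def e using pa e
      by (intro exI[of _ c] conjI disjI1) auto
    then have tn: "tagok s' ?tn" using lt unfolding tagok_def by blast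
    show ?thesis unfolding invB_def e
    proof (intro conjI allI ballI impI)
      fix c' show "phB s' (((ph s)(c := PD oi (ctr s) ?tn v {} {})) c')"
        using P[of c'] tg e tn by (cases "c' = c") (auto intro: phB_mono)
    next
      fix m assume mm: "m \<in> net s"
      have Mm: "\<And>m. m \<in> net s \<Longrightarrow> msgB s' m" by (rule msgB_mono[OF M]) (auto simp: e)
      show "msgB s' m" using mm Mm[of m] by auto
    qed (use fs sg tg L H lt in auto)
  next
    case (end_getdata c oi i R Q L' T w)
    have e: "hist s' = hist s @ [PrimResp i (RPair (Max T) w), PrimInv (ctr s) c (PutData (Max T) w)]"
      "signed s' = signed s" "lst s' = lst s" "ph s' = (ph s)(c := PD oi (ctr s) (Max T) w {} {})"
      "net s' = net s" using end_getdata by simp_all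
    have "T \<subseteq> fst ` signed s" using T_sub[OF end_getdata(6), of "signed s"] end_getdata(5) by auto
    then have "finite T" using fs finite_subset by blast
    then have "Max T \<in> T" using end_getdata(7) by simp
    then have "Max T \<in> fst ` signed s" using \<open>T \<subseteq> fst ` signed s\<close> by blast
    then have tm: "tagok s (Max T)" using sg by force
    then have lt: "t0 \<le> Max T" unfolding tagok_def by blast
    have tn: "tagok s' (Max T)" using tg tm by blast
    show ?thesis unfolding invB_def e
    proof (intro conjI allI ballI impI)
      fix c' show "phB s' (((ph s)(c := PD oi (ctr s) (Max T) w {} {})) c')"
        using P[of c'] tg e tn by (cases "c' = c") (auto intro: phB_mono)
    next
      fix m assume mm: "m \<in> net s"
      have Mm: "\<And>m. m \<in> net s \<Longrightarrow> msgB s' m" by (rule msgB_mono[OF M]) (auto simp: e)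
      show "msgB s' m" using mm Mm[of m] by auto
    qed (use fs sg tg L H lt in auto)
  next
    case (send_put c oi i t v S A j)
    let ?x = "(t, enc v j, Some c)"
    have e: "hist s' = hist s" "signed s' = insert ?x (signed s)" "lst s' = lst s" "ph s' = (ph s)(c := PD oi i t v (insert j S) A)"
      "net s' = insert (Cl c, Fx j, PutReq i ?x) (net s)" using send_put by simp_all
    have tt: "tagok s' t" using P[of c] send_put tg by simp
    have pa: "PrimInv i c (PutData t v) \<in> set (hist s)" using PA[of c] send_put by simp
    show ?thesis unfolding invB_def e
    proof (intro conjI allI ballI impI)
      fix j' assume "j' \<in> C" then show "lst s j' \<subseteq> insert ?x (signed s)"
        using L by blast
    next
      fix c' show "phB s' (((ph s)(c := PD oi i t v (insert j S) A)) c')"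
        using P[of c'] tg e tt by (cases "c' = c") (auto intro: phB_mono)
    next
      fix m assume mm: "m \<in> insert (Cl c, Fx j, PutReq i ?x) (net s)"
      have Mm: "\<And>m. m \<in> net s \<Longrightarrow> msgB s' m" by (rule msgB_mono[OF M]) (auto simp: e)
      show "msgB s' m" using mm Mm[of m] pa e by auto
    qed (use fs sg tg L H tt in auto)
  next
    case (end_put c oi i t v S A Q)
    have e: "hist s' = hist s @ [PrimResp i RAck, OpResp oi]"
      "signed s' = signed s" "lst s' = lst s" "ph s' = (ph s)(c := Idle)"
      "net s' = net s" using end_put by simp_all
    show ?thesis unfolding invB_def e
    proof (intro conjI allI ballI impI)
      fix c' show "phB s' (((ph s)(c := Idle)) c')"
        using P[of c'] tg e by (cases "c' = c") (auto intro: phB_mono)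
    next
      fix m assume mm: "m \<in> net s"
      have Mm: "\<And>m. m \<in> net s \<Longrightarrow> msgB s' m" by (rule msgB_mono[OF M]) (auto simp: e)
      show "msgB s' m" using mm Mm[of m] by auto
    qed (use fs sg tg L H in auto)
  next
    case (node_put j src i x)
    have e: "hist s' = hist s" "signed s' = signed s"
      "lst s' = (lst s)(j := (if x \<in> signed s then add_entry \<delta> (lst s j) x else lst s j))" "ph s' = ph s"
      "net s' = insert (Fx j, src, PutAck i) (net s - {(src, Fx j, PutReq i x)})" using node_put by simp_all
    have Lj: "finite (lst s' j) \<and> inj_on fst (lst s' j) \<and> lst s' j \<subseteq> signed s'"
    proof (cases "x \<in> signed s")
      case True
      then have "lst s' j = add_entry \<delta> (lst s j) x" using e by simp
      moreover have "add_entry \<delta> (lst s j) x \<subseteq> signed s"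
        using add_entry_sub[of \<delta> "lst s j" x] L[OF node_put(2)] True by blast
      ultimately show ?thesis using L[OF node_put(2)] finite_add_entry[of "lst s j" \<delta> x] inj_add_entry[of "lst s j" \<delta> x] e by simp
    next
      case False
      then show ?thesis using L[OF node_put(2)] e by simp
    qed
    have ma: "msgB s' (Fx j, src, PutAck i)" by (cases src) auto
    have Lall: "\<And>j'. j' \<in> C \<Longrightarrow> finite (lst s' j') \<and> inj_on fst (lst s' j') \<and> lst s' j' \<subseteq> signed s'"
      using Lj L e by (case_tac "j' = j") auto
    show ?thesis unfolding invB_def
    proof (intro conjI allI ballI impI)
      fix c' show "phB s' (ph s' c')"
        using P[of c'] tg e by (auto intro: phB_mono)
    next
      fix m assume mm: "m \<in> net s'"
      have Mm: "\<And>m. m \<in> net s \<Longrightarrow> msgB s' m" by (rule msgB_mono[OF M]) (auto simp: e)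
      show "msgB s' m" using mm Mm[of m] ma e by auto
    qed (use fs sg tg Lall H e in auto)
  next
    case (node_tag j src i x)
    have e: "hist s' = hist s" "signed s' = signed s" "lst s' = lst s" "ph s' = ph s"
      "net s' = insert (Fx j, src, TagRep i x) (net s - {(src, Fx j, TagReq i)})" using node_tag by simp_all
    have ma: "msgB s' (Fx j, src, TagRep i x)" using L[OF node_tag(2)] node_tag(5) e by (cases src) auto
    show ?thesis unfolding invB_def
    proof (intro conjI allI ballI impI)
      fix c' show "phB s' (ph s' c')"
        using P[of c'] tg e by (auto intro: phB_mono)
    next
      fix m assume mm: "m \<in> net s'"
      have Mm: "\<And>m. m \<in> net s \<Longrightarrow> msgB s' m" by (rule msgB_mono[OF M]) (auto simp: e)
      show "msgB s' m" using mm Mm[of m] ma e by auto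
    qed (use fs sg tg L H e in auto)
  next
    case (node_data j src i)
    have e: "hist s' = hist s" "signed s' = signed s" "lst s' = lst s" "ph s' = ph s"
      "net s' = insert (Fx j, src, DataRep i (lst s j)) (net s - {(src, Fx j, DataReq i)})" using node_data by simp_all
    have ma: "msgB s' (Fx j, src, DataRep i (lst s j))" using L[OF node_data(2)] e by (cases src) auto
    show ?thesis unfolding invB_def
    proof (intro conjI allI ballI impI)
      fix c' show "phB s' (ph s' c')"
        using P[of c'] tg e by (auto intro: phB_mono)
    next
      fix m assume mm: "m \<in> net s'"
      have Mm: "\<And>m. m \<in> net s \<Longrightarrow> msgB s' m" by (rule msgB_mono[OF M]) (auto simp: e)
      show "msgB s' m" using mm Mm[of m] ma e by auto
    qed (use fs sg tg L H e in auto)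
  next
    case (byz_send j dst pl)
    have e: "hist s' = hist s" "signed s' = signed s" "lst s' = lst s" "ph s' = ph s"
      "net s' = insert (Fx j, dst, pl) (net s)" using byz_send by simp_all
    have ma: "msgB s' (Fx j, dst, pl)" using byz_send(2) by (cases dst; cases pl) auto
    show ?thesis unfolding invB_def
    proof (intro conjI allI ballI impI)
      fix c' show "phB s' (ph s' c')"
        using P[of c'] tg e by (auto intro: phB_mono)
    next
      fix m assume mm: "m \<in> net s'"
      have Mm: "\<And>m. m \<in> net s \<Longrightarrow> msgB s' m" by (rule msgB_mono[OF M]) (auto simp: e)
      show "msgB s' m" using mm Mm[of m] ma e by auto
    qed (use fs sg tg L H e in auto)
  qed
qed

lemma invB_reach: "rch s \<Longrightarrow> invB s"
proof (induction rule: reach.induct)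
  case reach_init then show ?case by (rule invB_init)
next
  case (reach_step s s') then show ?case using invB_step invA_reach by blast
qed

end


context proto begin

definition reqafter :: "nat \<Rightarrow> nat \<Rightarrow> ('c,'v) event list \<Rightarrow> bool" where
  "reqafter n i h \<longleftrightarrow> (\<exists>m c pk. n < m \<and> m < length h \<and> h ! m = PrimInv i c pk)"

lemma hist_ext: "stp s s' \<Longrightarrow> \<exists>E. hist s' = hist s @ E \<and> (\<forall>i c pk. PrimInv i c pk \<in> set E \<longrightarrow> ctr s \<le> i)"
  by (cases rule: step.cases) auto

lemma reqafter_back:
  assumes "stp s s'" "reqafter n i (hist s')" "i < ctr s"
  shows "reqafter n i (hist s)"
proof -
  obtain E where E: "hist s' = hist s @ E" "\<forall>i c pk. PrimInv i c pk \<in> set E \<longrightarrow> ctr s \<le> i"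
    using hist_ext[OF assms(1)] by blast
  obtain m c pk where m: "n < m" "m < length (hist s')" "hist s' ! m = PrimInv i c pk"
    using assms(2) unfolding reqafter_def by blast
  have "m < length (hist s)"
  proof (rule ccontr)
    assume "\<not> m < length (hist s)"
    then have "E ! (m - length (hist s)) = PrimInv i c pk" "m - length (hist s) < length E"
      using m E(1) by (auto simp: nth_append)
    then have "PrimInv i c pk \<in> set E" by (metis nth_mem)
    then show False using E(2) assms(3) by fastforce
  qed
  then show ?thesis using m E(1) unfolding reqafter_def by (auto simp: nth_append)
qed

lemma set_hist_mono: "stp s s' \<Longrightarrow> set (hist s) \<subseteq> set (hist s')"
  using hist_ext by fastforce

lemma new_TagRep:
  assumes "stp s s'" "(Fx j, Cl c, TagRep i x) \<in> net s'" "(Fx j, Cl c, TagRep i x) \<notin> net s" "j \<notin> B"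
  shows "x \<in> lst s j \<and> (\<forall>y\<in>lst s j. fst y \<le> fst x) \<and> lst s' = lst s \<and> hist s' = hist s \<and> ph s' = ph s"
  using assms by (cases rule: step.cases) auto

lemma new_DataRep:
  assumes "stp s s'" "(Fx j, Cl c, DataRep i X) \<in> net s'" "(Fx j, Cl c, DataRep i X) \<notin> net s" "j \<notin> B"
  shows "X = lst s j \<and> lst s' = lst s \<and> hist s' = hist s \<and> ph s' = ph s"
  using assms by (cases rule: step.cases) auto

lemma new_PutAck:
  assumes "stp s s'" "(Fx j, Cl c, PutAck i) \<in> net s'" "(Fx j, Cl c, PutAck i) \<notin> net s" "j \<notin> B"
  shows "\<exists>x. (Cl c, Fx j, PutReq i x) \<in> net s \<and> lst s' j = (if x \<in> signed s then add_entry \<delta> (lst s j) x else lst s j)"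
  using assms by (cases rule: step.cases) auto

lemma phase_GT_src:
  assumes "stp s s'" "ph s' c = GT oi i v R'" "R' j = Some x"
  shows "(\<exists>R. ph s c = GT oi i v R \<and> R j = Some x) \<or> (\<exists>j'. j' = j \<and> (Fx j, Cl c, TagRep i x) \<in> net s)"
  using assms
proof (cases rule: step.cases)
  case (client_recv j' c' pl)
  show ?thesis
  proof (cases "c' = c")
    case True
    then have "crecv (ph s c) j' pl = GT oi i v R'" using client_recv assms(2) by simp
    from crecv_GT[OF this] obtain R where "ph s c = GT oi i v R"
      "R' = R \<or> (\<exists>x. pl = TagRep i x \<and> R j' = None \<and> R' = R(j' \<mapsto> x))" by blast
    then show ?thesis using assms(3) client_recv True by (cases "j = j'") auto
  next
    case False then show ?thesis using client_recv assms by auto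
  qed
qed (auto split: if_splits)

lemma phase_GD_src:
  assumes "stp s s'" "ph s' c = GD oi i R'" "R' j = Some X"
  shows "(\<exists>R. ph s c = GD oi i R \<and> R j = Some X) \<or> (Fx j, Cl c, DataRep i X) \<in> net s"
  using assms
proof (cases rule: step.cases)
  case (client_recv j' c' pl)
  show ?thesis
  proof (cases "c' = c")
    case True
    then have "crecv (ph s c) j' pl = GD oi i R'" using client_recv assms(2) by simp
    from crecv_GD[OF this] obtain R where "ph s c = GD oi i R"
      "R' = R \<or> (\<exists>X. pl = DataRep i X \<and> R j' = None \<and> R' = R(j' \<mapsto> X))" by blast
    then show ?thesis using assms(3) client_recv True by (cases "j = j'") auto
  next
    case False then show ?thesis using client_recv assms by auto
  qed
qed (auto split: if_splits)

lemma phase_PD_src: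
  assumes "stp s s'" "ph s' c = PD oi i t v S' A'" "j \<in> A'"
  shows "(\<exists>S A. ph s c = PD oi i t v S A \<and> j \<in> A) \<or> (\<exists>S A. ph s c = PD oi i t v S A \<and> (Fx j, Cl c, PutAck i) \<in> net s)"
  using assms
proof (cases rule: step.cases)
  case (client_recv j' c' pl)
  show ?thesis
  proof (cases "c' = c")
    case True
    then have "crecv (ph s c) j' pl = PD oi i t v S' A'" using client_recv assms(2) by simp
    from crecv_PD[OF this] obtain A where "ph s c = PD oi i t v S' A"
      "A' = A \<or> (pl = PutAck i \<and> A' = insert j' A)" by blast
    then show ?thesis using assms(3) client_recv True by (cases "j = j'") auto
  next
    case False then show ?thesis using client_recv assms by auto
  qed
next
  case (send_put c' oi' i' t' v' S A j')
  then show ?thesis using assms by (cases "c' = c") auto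
qed (auto split: if_splits)

lemma new_RAck:
  assumes "stp s s'" "length (hist s) \<le> n" "n < length (hist s')" "hist s' ! n = PrimResp i RAck"
  shows "\<exists>c oi t v S A Q. ph s c = PD oi i t v S A \<and> is_quorum C k Q \<and> Q \<subseteq> A \<and>
     hist s' = hist s @ [PrimResp i RAck, OpResp oi] \<and> n = length (hist s) \<and> lst s' = lst s \<and> net s' = net s \<and> ph s' = (ph s)(c := Idle)"
  using assms
proof (cases rule: step.cases)
  case (end_put c oi i' t v S A Q)
  have "n = length (hist s)" "i' = i" using end_put assms by (auto simp: nth_append less_Suc_eq split: if_splits)
  then show ?thesis using end_put
    by (intro exI[of _ c] exI[of _ oi] exI[of _ t] exI[of _ v] exI[of _ S] exI[of _ A] exI[of _ Q]) simp
qed (auto simp: nth_append less_Suc_eq split: if_splits)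

end

context proto2 begin

lemma good_lst_step:
  assumes "invB s" "stp s s'" "j \<in> C" "good \<delta> t (lst s j)"
  shows "good \<delta> t (lst s' j)"
  using assms(2)
proof (cases rule: step.cases)
  case (node_put j' src i x)
  have L: "finite (lst s j) \<and> inj_on fst (lst s j)" using assms(1,3) unfolding invB_def by blast
  show ?thesis using node_put assms(4) good_add_entry[of "lst s j" \<delta> t x] L by auto
qed (use assms in auto)

end


context proto begin

definition ackd :: "('p,'c,'v,'e) gstate \<Rightarrow> nat \<Rightarrow> 'c tag \<Rightarrow> 'p \<Rightarrow> bool" where
  "ackd s n t j \<longleftrightarrow> good \<delta> t (lst s j) \<and>
    (\<forall>c i x. (Fx j, Cl c, TagRep i x) \<in> net s \<longrightarrow> reqafter n i (hist s) \<longrightarrow> t \<le> fst x) \<and>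
    (\<forall>c i X. (Fx j, Cl c, DataRep i X) \<in> net s \<longrightarrow> reqafter n i (hist s) \<longrightarrow> good \<delta> t X) \<and>
    (\<forall>c oi i v R x. ph s c = GT oi i v R \<longrightarrow> R j = Some x \<longrightarrow> reqafter n i (hist s) \<longrightarrow> t \<le> fst x) \<and>
    (\<forall>c oi i R X. ph s c = GD oi i R \<longrightarrow> R j = Some X \<longrightarrow> reqafter n i (hist s) \<longrightarrow> good \<delta> t X)"

definition invC :: "('p,'c,'v,'e) gstate \<Rightarrow> bool" where
  "invC s \<longleftrightarrow>
    (\<forall>c j i. j \<in> C \<longrightarrow> j \<notin> B \<longrightarrow> (Fx j, Cl c, PutAck i) \<in> net s \<longrightarrow>
        (\<exists>t v. PrimInv i c (PutData t v) \<in> set (hist s) \<and> good \<delta> t (lst s j))) \<and>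
    (\<forall>c oi i t v S A j. ph s c = PD oi i t v S A \<longrightarrow> j \<in> A \<longrightarrow> j \<in> C \<longrightarrow> j \<notin> B \<longrightarrow> good \<delta> t (lst s j)) \<and>
    (\<forall>n i. n < length (hist s) \<longrightarrow> hist s ! n = PrimResp i RAck \<longrightarrow>
        (\<exists>t v c QA. PrimInv i c (PutData t v) \<in> set (hist s) \<and> is_quorum C k QA \<and> (\<forall>j\<in>QA. j \<notin> B \<longrightarrow> ackd s n t j)))"

end

context proto2 begin

lemma ackd_step:
  assumes IA: "invA s" and IB: "invB s" and st: "stp s s'" and j: "j \<in> C" "j \<notin> B"
    and A: "ackd s n t j"
  shows "ackd s' n t j"
proof -
  have g: "good \<delta> t (lst s j)"
    and a1: "\<And>c i x. (Fx j, Cl c, TagRep i x) \<in> net s \<Longrightarrow> reqafter n i (hist s) \<Longrightarrow> t \<le> fst x"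
    and a2: "\<And>c i X. (Fx j, Cl c, DataRep i X) \<in> net s \<Longrightarrow> reqafter n i (hist s) \<Longrightarrow> good \<delta> t X"
    and a3: "\<And>c oi i v R x. ph s c = GT oi i v R \<Longrightarrow> R j = Some x \<Longrightarrow> reqafter n i (hist s) \<Longrightarrow> t \<le> fst x"
    and a4: "\<And>c oi i R X. ph s c = GD oi i R \<Longrightarrow> R j = Some X \<Longrightarrow> reqafter n i (hist s) \<Longrightarrow> good \<delta> t X"
    using A unfolding ackd_def by blast+
  have M: "\<And>m. m \<in> net s \<Longrightarrow> msgA (ctr s) m" and P: "\<And>c. phA (hist s) c (ph s c)"
    and ids: "\<forall>e\<in>set (hist s). evid e < ctr s"
    using IA unfolding invA_def by blast+
  have pi_lt: "\<And>x c kd. PrimInv x c kd \<in> set (hist s) \<Longrightarrow> x < ctr s" using ids by force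
  have fin: "finite (lst s j)" using IB j unfolding invB_def by blast
  have g': "good \<delta> t (lst s' j)" using good_lst_step[OF IB st j(1) g] .
  have b1: "t \<le> fst x" if "(Fx j, Cl c, TagRep i x) \<in> net s'" "reqafter n i (hist s')" for c i x
  proof (cases "(Fx j, Cl c, TagRep i x) \<in> net s")
    case True
    then have "i < ctr s" using M[OF True] j by simp
    then show ?thesis using a1[OF True] reqafter_back[OF st that(2)] by blast
  next
    case False
    from new_TagRep[OF st that(1) False j(2)]
    have x: "x \<in> lst s j" "\<forall>y\<in>lst s j. fst y \<le> fst x" by auto
    obtain y where "y \<in> lst s j" "t \<le> fst y" using good_ex[OF fin g] by blast
    then show ?thesis using x by (meson order_trans)
  qed
  have b2: "good \<delta> t X" if "(Fx j, Cl c, DataRep i X) \<in> net s'" "reqafter n i (hist s')" for c i X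
  proof (cases "(Fx j, Cl c, DataRep i X) \<in> net s")
    case True
    then have "i < ctr s" using M[OF True] j by simp
    then show ?thesis using a2[OF True] reqafter_back[OF st that(2)] by blast
  next
    case False
    from new_DataRep[OF st that(1) False j(2)] have "X = lst s j" by auto
    then show ?thesis using g by simp
  qed
  have b3: "t \<le> fst x" if "ph s' c = GT oi i v R" "R j = Some x" "reqafter n i (hist s')" for c oi i v R x
  proof -
    from phase_GT_src[OF st that(1,2)]
    show ?thesis
    proof (elim disjE exE conjE)
      fix R0 assume r: "ph s c = GT oi i v R0" "R0 j = Some x"
      then have "PrimInv i c GetTag \<in> set (hist s)" using P[of c] by simp
      then have "i < ctr s" using pi_lt by blast
      then show ?thesis using a3[OF r] reqafter_back[OF st that(3)] by blast
    next
      assume r: "(Fx j, Cl c, TagRep i x) \<in> net s"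
      then have "i < ctr s" using M[OF r] j by simp
      then show ?thesis using a1[OF r] reqafter_back[OF st that(3)] by blast
    qed
  qed
  have b4: "good \<delta> t X" if "ph s' c = GD oi i R" "R j = Some X" "reqafter n i (hist s')" for c oi i R X
  proof -
    from phase_GD_src[OF st that(1,2)]
    show ?thesis
    proof (elim disjE exE conjE)
      fix R0 assume r: "ph s c = GD oi i R0" "R0 j = Some X"
      then obtain m where "Suc m < length (hist s)" "hist s ! Suc m = PrimInv i c GetData" using P[of c] by auto
      then have "PrimInv i c GetData \<in> set (hist s)" by (metis nth_mem)
      then have "i < ctr s" using pi_lt by blast
      then show ?thesis using a4[OF r] reqafter_back[OF st that(3)] by blast
    next
      assume r: "(Fx j, Cl c, DataRep i X) \<in> net s"
      then have "i < ctr s" using M[OF r] j by simp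
      then show ?thesis using a2[OF r] reqafter_back[OF st that(3)] by blast
    qed
  qed
  show ?thesis unfolding ackd_def using g' b1 b2 b3 b4 by blast
qed

lemma invC_init: "invC (init_state C enc t0 v0)"
  by (simp add: invC_def init_state_def)

lemma invC_step:
  assumes IA: "invA s" and IB: "invB s" and IC: "invC s" and st: "stp s s'"
  shows "invC s'"
proof -
  have c1: "\<And>c j i. j \<in> C \<Longrightarrow> j \<notin> B \<Longrightarrow> (Fx j, Cl c, PutAck i) \<in> net s \<Longrightarrow>
        (\<exists>t v. PrimInv i c (PutData t v) \<in> set (hist s) \<and> good \<delta> t (lst s j))"
    and c2: "\<And>c oi i t v S A j. ph s c = PD oi i t v S A \<Longrightarrow> j \<in> A \<Longrightarrow> j \<in> C \<Longrightarrow> j \<notin> B \<Longrightarrow> good \<delta> t (lst s j)"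
    and c3: "\<And>n i. n < length (hist s) \<Longrightarrow> hist s ! n = PrimResp i RAck \<Longrightarrow>
        (\<exists>t v c QA. PrimInv i c (PutData t v) \<in> set (hist s) \<and> is_quorum C k QA \<and> (\<forall>j\<in>QA. j \<notin> B \<longrightarrow> ackd s n t j))"
    using IC unfolding invC_def by blast+
  have P: "\<And>c. phA (hist s) c (ph s c)" and U2: "uniqPI (hist s)" using IA unfolding invA_def by blast+
  have MB: "\<And>m. m \<in> net s \<Longrightarrow> msgB s m" and L: "\<And>j. j \<in> C \<Longrightarrow> finite (lst s j) \<and> inj_on fst (lst s j)"
    using IB unfolding invB_def by blast+
  have hm: "set (hist s) \<subseteq> set (hist s')" using set_hist_mono[OF st] .
  have d1: "\<exists>t v. PrimInv i c (PutData t v) \<in> set (hist s') \<and> good \<delta> t (lst s' j)"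
    if "j \<in> C" "j \<notin> B" "(Fx j, Cl c, PutAck i) \<in> net s'" for c j i
  proof (cases "(Fx j, Cl c, PutAck i) \<in> net s")
    case True
    then show ?thesis using c1[OF that(1,2) True] good_lst_step[OF IB st that(1)] hm by blast
  next
    case False
    from new_PutAck[OF st that(3) False that(2)] obtain x where
      x: "(Cl c, Fx j, PutReq i x) \<in> net s" "lst s' j = (if x \<in> signed s then add_entry \<delta> (lst s j) x else lst s j)" by blast
    have "x \<in> signed s" "\<exists>v. PrimInv i c (PutData (fst x) v) \<in> set (hist s)" using MB[OF x(1)] by auto
    moreover have "good \<delta> (fst x) (lst s' j)" using x(2) \<open>x \<in> signed s\<close> good_new[of "lst s j" \<delta> x] L[OF that(1)] by simp
    ultimately show ?thesis using hm by blast
  qed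
  have d2: "good \<delta> t (lst s' j)" if tt: "ph s' c = PD oi i t v S A" "j \<in> A" "j \<in> C" "j \<notin> B" for c oi i t v S A j
  proof -
    from phase_PD_src[OF st tt(1,2)] show ?thesis
    proof (elim disjE exE conjE)
      fix S0 A0 assume "ph s c = PD oi i t v S0 A0" "j \<in> A0"
      then show ?thesis using c2 good_lst_step[OF IB st tt(3)] tt by blast
    next
      fix S0 A0 assume r: "ph s c = PD oi i t v S0 A0" "(Fx j, Cl c, PutAck i) \<in> net s"
      obtain t' v' where t': "PrimInv i c (PutData t' v') \<in> set (hist s)" "good \<delta> t' (lst s j)"
        using c1[OF tt(3,4) r(2)] by blast
      have pv: "PrimInv i c (PutData t v) \<in> set (hist s)" using P[of c] r(1) by simp
      have "t' = t" using uniqPI_D[OF U2 t'(1) pv] by simp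
      then show ?thesis using t'(2) good_lst_step[OF IB st tt(3)] by blast
    qed
  qed
  have d3: "\<exists>t v c QA. PrimInv i c (PutData t v) \<in> set (hist s') \<and> is_quorum C k QA \<and> (\<forall>j\<in>QA. j \<notin> B \<longrightarrow> ackd s' n t j)"
    if "n < length (hist s')" "hist s' ! n = PrimResp i RAck" for n i
  proof (cases "n < length (hist s)")
    case True
    obtain E where E: "hist s' = hist s @ E" using hist_ext[OF st] by blast
    have "hist s ! n = PrimResp i RAck" using that True E by (simp add: nth_append)
    from c3[OF True this] obtain t v c QA where q: "PrimInv i c (PutData t v) \<in> set (hist s)" "is_quorum C k QA"
      "\<forall>j\<in>QA. j \<notin> B \<longrightarrow> ackd s n t j" by blast
    have "\<forall>j\<in>QA. j \<notin> B \<longrightarrow> ackd s' n t j"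
    proof (intro ballI impI)
      fix j assume "j \<in> QA" "j \<notin> B"
      then have "j \<in> C" using q(2) unfolding is_quorum_def by blast
      then show "ackd s' n t j" using ackd_step[OF IA IB st _ \<open>j \<notin> B\<close>] q(3) \<open>j \<in> QA\<close> \<open>j \<notin> B\<close> by blast
    qed
    then show ?thesis using q hm by blast
  next
    case False
    from new_RAck[OF st _ that] False obtain c oi t v S A Q where
      r: "ph s c = PD oi i t v S A" "is_quorum C k Q" "Q \<subseteq> A"
      "hist s' = hist s @ [PrimResp i RAck, OpResp oi]" "n = length (hist s)" "lst s' = lst s" "net s' = net s"
      "ph s' = (ph s)(c := Idle)" by (meson not_less)
    have pi: "PrimInv i c (PutData t v) \<in> set (hist s)" using P[of c] r(1) by simp
    have nr: "\<not> reqafter n i' (hist s')" for i'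
      unfolding reqafter_def r(4) r(5) by (auto simp: nth_append less_Suc_eq)
    have "\<forall>j\<in>Q. j \<notin> B \<longrightarrow> ackd s' n t j"
    proof (intro ballI impI)
      fix j assume "j \<in> Q" "j \<notin> B"
      then have "j \<in> C" "j \<in> A" using r(2,3) unfolding is_quorum_def by blast+
      then have "good \<delta> t (lst s' j)" using c2[OF r(1)] \<open>j \<notin> B\<close> r(6) by simp
      then show "ackd s' n t j" unfolding ackd_def using nr by blast
    qed
    then show ?thesis using r(2) pi hm by blast
  qed
  show ?thesis unfolding invC_def using d1 d2 d3 by blast
qed

lemma inv_reach: "rch s \<Longrightarrow> invA s \<and> invB s \<and> invC s"
proof (induction rule: reach.induct)
  case reach_init then show ?case using invA_init invB_init invC_init by blast
next
  case (reach_step s s') then show ?case using invA_step invB_step invC_step by blast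
qed

end


lemma op_invoked_fin: "finite {w. op_invoked h w}"
proof -
  have "{w. op_invoked h w} \<subseteq> evid ` set h"
    unfolding op_invoked_def by (force intro: image_eqI[OF _ nth_mem])
  then show ?thesis using finite_subset by blast
qed

lemma op_invoked_app: "op_invoked h w \<Longrightarrow> op_invoked (h @ E) w"
  unfolding op_invoked_def by (metis length_append nth_append trans_less_add1)

lemma cb_app:
  assumes "uniqOI (h @ E)" "op_invoked h y" "completes_before (h @ E) x y"
  shows "completes_before h x y"
proof -
  obtain n m c kd where a: "n < m" "m < length (h @ E)" "(h @ E) ! n = OpResp x" "(h @ E) ! m = OpInv y c kd"
    using assms(3) unfolding completes_before_def by blast
  obtain m0 c0 kd0 where b: "m0 < length h" "h ! m0 = OpInv y c0 kd0" using assms(2) unfolding op_invoked_def by blast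
  have "(h @ E) ! m0 = OpInv y c0 kd0" using b by (simp add: nth_append)
  then have "m = m0" using assms(1) a(2,4) b(1) unfolding uniqOI_def by (metis length_append trans_less_add1)
  then show ?thesis using a b unfolding completes_before_def by (metis nth_append order.strict_trans)
qed

lemma bounded_prefix:
  assumes "writes_conc_bounded d (h @ E)" "uniqOI (h @ E)"
  shows "writes_conc_bounded d h"
  unfolding writes_conc_bounded_def
proof (intro allI impI)
  fix r assume r: "is_read h r"
  then have r': "is_read (h @ E) r" unfolding is_read_def by (metis length_append nth_append trans_less_add1)
  have sub: "{w. is_write h w \<and> concurrent h w r} \<subseteq> {w. is_write (h @ E) w \<and> concurrent (h @ E) w r}"
  proof
    fix w assume "w \<in> {w. is_write h w \<and> concurrent h w r}"
    then have w: "is_write h w" "concurrent h w r" by auto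
    have "is_write (h @ E) w" using w(1) unfolding is_write_def by (metis length_append nth_append trans_less_add1)
    moreover have "concurrent (h @ E) w r"
      using w(2) cb_app[OF assms(2)] op_invoked_app unfolding concurrent_def by blast
    ultimately show "w \<in> {w. is_write (h @ E) w \<and> concurrent (h @ E) w r}" by blast
  qed
  have "finite {w. is_write (h @ E) w \<and> concurrent (h @ E) w r}"
    using op_invoked_fin[of "h @ E"] by (rule finite_subset[rotated]) (auto simp: concurrent_def)
  then have "card {w. is_write h w \<and> concurrent h w r} \<le> card {w. is_write (h @ E) w \<and> concurrent (h @ E) w r}"
    using sub card_mono by blast
  also have "\<dots> \<le> d" using assms(1) r' unfolding writes_conc_bounded_def by blast
  finally show "card {w. is_write h w \<and> concurrent h w r} \<le> d" .
qed

context proto begin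

lemma WrW_fun:
  assumes IA: "invA s" and W1: "WrW s t1 w" and W2: "WrW s t2 w"
  shows "t1 = t2"
proof -
  have U1: "uniqOI (hist s)" and U2: "uniqPI (hist s)" and U3: "uniqOR (hist s)" using IA unfolding invA_def by blast+
  obtain c1 where c1: "OpInv w c1 WriteOp \<in> set (hist s)"
    "(\<exists>i v S A. ph s c1 = PD w i t1 v S A \<and> OpResp w \<notin> set (hist s)) \<or>
      (\<exists>n i v. Suc n < length (hist s) \<and> hist s ! n = PrimResp i RAck \<and> hist s ! Suc n = OpResp w \<and>
               PrimInv i c1 (PutData t1 v) \<in> set (hist s))" using W1 unfolding WrW_def by blast
  obtain c2 where c2: "OpInv w c2 WriteOp \<in> set (hist s)"
    "(\<exists>i v S A. ph s c2 = PD w i t2 v S A \<and> OpResp w \<notin> set (hist s)) \<or>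
      (\<exists>n i v. Suc n < length (hist s) \<and> hist s ! n = PrimResp i RAck \<and> hist s ! Suc n = OpResp w \<and>
               PrimInv i c2 (PutData t2 v) \<in> set (hist s))" using W2 unfolding WrW_def by blast
  have "c1 = c2" using uniqOI_D[OF U1 c1(1) c2(1)] by simp
  show ?thesis
  proof (cases "OpResp w \<in> set (hist s)")
    case False
    then have "\<exists>i v S A. ph s c1 = PD w i t1 v S A" "\<exists>i v S A. ph s c2 = PD w i t2 v S A"
      using c1(2) c2(2) by (auto dest: nth_mem)
    then show ?thesis using \<open>c1 = c2\<close> by auto
  next
    case True
    obtain n1 i1 v1 where n1: "Suc n1 < length (hist s)" "hist s ! n1 = PrimResp i1 RAck" "hist s ! Suc n1 = OpResp w"
      "PrimInv i1 c1 (PutData t1 v1) \<in> set (hist s)" using c1(2) True by blast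
    obtain n2 i2 v2 where n2: "Suc n2 < length (hist s)" "hist s ! n2 = PrimResp i2 RAck" "hist s ! Suc n2 = OpResp w"
      "PrimInv i2 c2 (PutData t2 v2) \<in> set (hist s)" using c2(2) True by blast
    have "Suc n1 = Suc n2" using U3 n1 n2 unfolding uniqOR_def by blast
    then have "i1 = i2" using n1(2) n2(2) by simp
    then have p2: "PrimInv i1 c2 (PutData t2 v2) \<in> set (hist s)" using n2(4) by simp
    show ?thesis using uniqPI_D[OF U2 n1(4) p2] by simp
  qed
qed

end

locale proto3 = proto2 C B k \<delta> enc dec t0 v0 for C B :: "'p set" and k \<delta> :: nat and enc :: "'v \<Rightarrow> 'p \<Rightarrow> 'e"
    and dec :: "('p \<times> 'e) set \<Rightarrow> 'v" and t0 :: "nat \<times> 'c::linorder" and v0 :: 'v +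
  assumes BC: "B \<subseteq> C" and bnd: "3 * card B + k < card C"
begin

lemma quorum_int:
  assumes "is_quorum C k Q1" "is_quorum C k Q2"
  shows "k < card (Q1 \<inter> Q2 - B)"
proof -
  let ?n = "card C" and ?q = "qsize (card C) k"
  have "real (2 * ?n + k) / 3 \<le> real ?q" unfolding qsize_def by linarith
  then have "real (2 * ?n + k) \<le> real (3 * ?q)" by simp
  then have q3: "2 * ?n + k \<le> 3 * ?q" by (simp only: of_nat_le_iff)
  have c: "card Q1 = ?q" "card Q2 = ?q" "Q1 \<subseteq> C" "Q2 \<subseteq> C" using assms unfolding is_quorum_def by auto
  have f: "finite Q1" "finite Q2" using c finC finite_subset by blast+
  have "card (Q1 \<union> Q2) + card (Q1 \<inter> Q2) = card Q1 + card Q2" using card_Un_Int[OF f] by simp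
  moreover have "card (Q1 \<union> Q2) \<le> ?n" using c finC by (intro card_mono) auto
  ultimately have i: "2 * ?q \<le> ?n + card (Q1 \<inter> Q2)" using c by linarith
  have "card (Q1 \<inter> Q2) - card B \<le> card (Q1 \<inter> Q2 - B)" by (rule diff_card_le_card_Diff) (use f BC finC finite_subset in auto)
  then show ?thesis using i q3 bnd by linarith
qed

end


lemma idx2:
  assumes "h' = h @ [e1, e2]" "b < length h'" "h' ! b = x" "x \<noteq> e1" "x \<noteq> e2"
  shows "b < length h \<and> h ! b = x"
proof (cases "b < length h")
  case True then show ?thesis using assms by (simp add: nth_append)
next
  case False
  then have "b = length h \<or> b = Suc (length h)" using assms(1,2) by auto
  then show ?thesis
  proof
    assume "b = length h" then show ?thesis using assms by simp
  next
    assume "b = Suc (length h)" then show ?thesis using assms by (simp add: nth_append)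
  qed
qed

fun ptag :: "('c,'v) event \<Rightarrow> 'c tag \<Rightarrow> 'c tag" where
  "ptag (PrimInv i c (PutData t v)) d = t"
| "ptag e d = d"

context proto begin

definition respok :: "('c,'v) event list \<Rightarrow> nat \<Rightarrow> ('c,'v) presult \<Rightarrow> bool" where
  "respok h \<pi> r \<longleftrightarrow> (\<forall>\<phi> a1 a2 b1 c1 c2 t\<phi> v\<phi> pk. a1 < length h \<and> h!a1 = PrimInv \<phi> c1 (PutData t\<phi> v\<phi>) \<and>
     a2 < length h \<and> h!a2 = PrimResp \<phi> RAck \<and> a2 < b1 \<and> b1 < length h \<and> h!b1 = PrimInv \<pi> c2 pk \<and>
     (pk = GetTag \<or> pk = GetData) \<longrightarrow> (\<exists>t. (r = RTag t \<or> (\<exists>v. r = RPair t v)) \<and> t\<phi> \<le> t))"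

definition main :: "('p,'c,'v,'e) gstate \<Rightarrow> bool" where
  "main s \<longleftrightarrow> (writes_conc_bounded \<delta> (hist s) \<longrightarrow>
     (\<forall>b2 \<pi> r. b2 < length (hist s) \<longrightarrow> hist s ! b2 = PrimResp \<pi> r \<longrightarrow> respok (hist s) \<pi> r))"

lemma idx_old:
  assumes "stp s s'" "b < length (hist s')" "hist s' ! b = PrimInv i c pk" "i < ctr s"
  shows "b < length (hist s) \<and> hist s ! b = PrimInv i c pk"
proof -
  obtain E where E: "hist s' = hist s @ E" "\<forall>i c pk. PrimInv i c pk \<in> set E \<longrightarrow> ctr s \<le> i"
    using hist_ext[OF assms(1)] by blast
  have "b < length (hist s)"
  proof (rule ccontr)
    assume "\<not> b < length (hist s)"
    then have "E ! (b - length (hist s)) = PrimInv i c pk" "b - length (hist s) < length E"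
      using assms(2,3) E(1) by (auto simp: nth_append)
    then have "PrimInv i c pk \<in> set E" by (metis nth_mem)
    then show False using E(2) assms(4) by fastforce
  qed
  then show ?thesis using assms(3) E(1) by (simp add: nth_append)
qed

lemma respok_ext:
  assumes IA: "invA s" and st: "stp s s'" and R: "respok (hist s) \<pi> r" and lt: "\<pi> < ctr s"
  shows "respok (hist s') \<pi> r"
  unfolding respok_def
proof (intro allI impI, elim conjE)
  fix \<phi> a1 a2 b1 c1 c2 t\<phi> v\<phi> pk
  assume a: "a1 < length (hist s')" "hist s' ! a1 = PrimInv \<phi> c1 (PutData t\<phi> v\<phi>)"
    "a2 < length (hist s')" "hist s' ! a2 = PrimResp \<phi> RAck" "a2 < b1" "b1 < length (hist s')"
    "hist s' ! b1 = PrimInv \<pi> c2 pk" "pk = GetTag \<or> pk = GetData"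
  have ids: "\<forall>e\<in>set (hist s). evid e < ctr s" using IA unfolding invA_def by blast
  obtain E where E: "hist s' = hist s @ E" using hist_ext[OF st] by blast
  have b1: "b1 < length (hist s)" "hist s ! b1 = PrimInv \<pi> c2 pk" using idx_old[OF st a(6,7) lt] by auto
  have a2: "a2 < length (hist s)" "hist s ! a2 = PrimResp \<phi> RAck" using b1 a(4,5) E by (auto simp: nth_append)
  have "\<phi> < ctr s" using ids a2 by (metis evid.simps(4) nth_mem)
  then have a1: "a1 < length (hist s)" "hist s ! a1 = PrimInv \<phi> c1 (PutData t\<phi> v\<phi>)" using idx_old[OF st a(1,2)] by auto
  show "\<exists>t. (r = RTag t \<or> (\<exists>v. r = RPair t v)) \<and> t\<phi> \<le> t"
    using R a1 a2 b1 a(5,8) unfolding respok_def by blast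
qed

lemma new_PrimResp:
  assumes "stp s s'" "length (hist s) \<le> b2" "b2 < length (hist s')" "hist s' ! b2 = PrimResp \<pi> r"
  shows "(\<exists>c oi v R Q T. ph s c = GT oi \<pi> v R \<and> is_quorum C k Q \<and> Q \<subseteq> dom R \<and>
            T = {fst x | x j. j \<in> Q \<and> R j = Some x \<and> x \<in> signed s} \<and> T \<noteq> {} \<and> r = RTag (Max T) \<and>
            hist s' = hist s @ [PrimResp \<pi> (RTag (Max T)), PrimInv (ctr s) c (PutData (Suc (fst (Max T)), c) v)]) \<or>
         (\<exists>c oi R Q L T w. ph s c = GD oi \<pi> R \<and> is_quorum C k Q \<and> Q \<subseteq> dom R \<and>
            L = (\<lambda>j. the (R j) \<inter> signed s) \<and> T = {t. k \<le> card {j \<in> Q. \<exists>e \<sigma>. (t, e, \<sigma>) \<in> L j}} \<and> T \<noteq> {} \<and>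
            r = RPair (Max T) w \<and>
            hist s' = hist s @ [PrimResp \<pi> (RPair (Max T) w), PrimInv (ctr s) c (PutData (Max T) w)]) \<or>
         (\<exists>c oi t v S A. ph s c = PD oi \<pi> t v S A \<and> r = RAck \<and> hist s' = hist s @ [PrimResp \<pi> RAck, OpResp oi])"
  using assms(1)
proof (cases rule: step.cases)
  case (end_gettag c oi i v R Q T)
  then have "b2 = length (hist s)" using assms(2-4) by (auto simp: nth_append less_Suc_eq)
  then have "i = \<pi>" "r = RTag (Max T)" using end_gettag assms(4) by auto
  then show ?thesis using end_gettag
    by (intro disjI1 exI[of _ c] exI[of _ oi] exI[of _ v] exI[of _ R] exI[of _ Q] exI[of _ T]) simp
next
  case (end_getdata c oi i R Q L T w)
  then have "b2 = length (hist s)" using assms(2-4) by (auto simp: nth_append less_Suc_eq)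
  then have "i = \<pi>" "r = RPair (Max T) w" using end_getdata assms(4) by auto
  then show ?thesis using end_getdata
    by (intro disjI2 disjI1 exI[of _ c] exI[of _ oi] exI[of _ R] exI[of _ Q] exI[of _ L] exI[of _ T] exI[of _ w]) simp
next
  case (end_put c oi i t v S A Q)
  then have "b2 = length (hist s)" using assms(2-4) by (auto simp: nth_append less_Suc_eq)
  then have "i = \<pi>" "r = RAck" using end_put assms(4) by auto
  then show ?thesis using end_put
    by (intro disjI2 exI[of _ c] exI[of _ oi] exI[of _ t] exI[of _ v] exI[of _ S] exI[of _ A]) simp
qed (use assms in \<open>auto simp: nth_append less_Suc_eq\<close>)

end


context proto3 begin

lemma gettag_ok:
  assumes IA: "invA s" and IB: "invB s" and IC: "invC s"
    and g: "ph s c = GT oi i v R" "is_quorum C k Q" "Q \<subseteq> dom R"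
      "T = {fst x | x j. j \<in> Q \<and> R j = Some x \<and> x \<in> signed s}"
    and hs: "hist s' = hist s @ [PrimResp i (RTag (Max T)), PrimInv (ctr s) c (PutData tn v)]"
  shows "respok (hist s') i (RTag (Max T))"
  unfolding respok_def
proof (intro allI impI, elim conjE)
  fix \<phi> a1 a2 b1 c1 c2 t\<phi> v\<phi> pk
  assume a: "a1 < length (hist s')" "hist s' ! a1 = PrimInv \<phi> c1 (PutData t\<phi> v\<phi>)"
    "a2 < length (hist s')" "hist s' ! a2 = PrimResp \<phi> RAck" "a2 < b1" "b1 < length (hist s')"
    "hist s' ! b1 = PrimInv i c2 pk" "pk = GetTag \<or> pk = GetData"
  have ids: "\<forall>e\<in>set (hist s). evid e < ctr s" and U2: "uniqPI (hist s)" and PA: "\<And>c. phA (hist s) c (ph s c)"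
    using IA unfolding invA_def by blast+
  have PB: "\<And>c. phB s (ph s c)" and fs: "finite (signed s)" using IB unfolding invB_def by blast+
  have DONE: "\<And>n i. n < length (hist s) \<Longrightarrow> hist s ! n = PrimResp i RAck \<Longrightarrow>
        (\<exists>t v c QA. PrimInv i c (PutData t v) \<in> set (hist s) \<and> is_quorum C k QA \<and> (\<forall>j\<in>QA. j \<notin> B \<longrightarrow> ackd s n t j))"
    using IC unfolding invC_def by blast
  have "PrimInv i c GetTag \<in> set (hist s)" using PA[of c] g(1) by simp
  then have ilt: "i < ctr s" using ids by force
  have b1: "b1 < length (hist s)" "hist s ! b1 = PrimInv i c2 pk" using idx2[OF hs a(6,7)] ilt by auto
  have a2: "a2 < length (hist s)" "hist s ! a2 = PrimResp \<phi> RAck" using b1 a(4,5) hs by (auto simp: nth_append)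
  have "\<phi> < ctr s" using ids a2 by (metis evid.simps(4) nth_mem)
  then have a1: "a1 < length (hist s)" "hist s ! a1 = PrimInv \<phi> c1 (PutData t\<phi> v\<phi>)" using idx2[OF hs a(1,2)] by auto
  then have a1': "PrimInv \<phi> c1 (PutData t\<phi> v\<phi>) \<in> set (hist s)" by (metis nth_mem)
  obtain t' v' c' QA where q: "PrimInv \<phi> c' (PutData t' v') \<in> set (hist s)" "is_quorum C k QA"
    "\<forall>j\<in>QA. j \<notin> B \<longrightarrow> ackd s a2 t' j" using DONE[OF a2] by blast
  have "t' = t\<phi>" using uniqPI_D[OF U2 q(1) a1'] by simp
  have "k < card (Q \<inter> QA - B)" using quorum_int[OF g(2) q(2)] .
  then obtain j where j: "j \<in> Q" "j \<in> QA" "j \<notin> B" by (metis Diff_iff Int_iff card.empty equals0I not_less0)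
  then have jC: "j \<in> C" using g(2) unfolding is_quorum_def by blast
  obtain x where x: "R j = Some x" using j(1) g(3) by blast
  have ra: "reqafter a2 i (hist s)" unfolding reqafter_def using a(5) b1 by blast
  have le1: "t\<phi> \<le> fst x" using q(3) j(2,3) x g(1) ra \<open>t' = t\<phi>\<close> unfolding ackd_def by blast
  have allsg: "\<forall>j x. j \<in> C \<longrightarrow> j \<notin> B \<longrightarrow> R j = Some x \<longrightarrow> x \<in> signed s" using PB[of c] g(1) by (metis phB.simps(2))
  have xs: "x \<in> signed s" using allsg jC j(3) x by blast
  have inT: "fst x \<in> T" using g(4) j(1) x xs by blast
  have "T \<subseteq> fst ` signed s"
  proof
    fix t assume "t \<in> T"
    then obtain y where "t = fst y" "y \<in> signed s" using g(4) by blast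
    then show "t \<in> fst ` signed s" by blast
  qed
  then have "finite T" using fs finite_subset by blast
  then have "fst x \<le> Max T" using inT by simp
  then have "t\<phi> \<le> Max T" using le1 by simp
  then show "\<exists>t. (RTag (Max T) = RTag t \<or> (\<exists>v. RTag (Max T) = RPair t v)) \<and> t\<phi> \<le> t" by blast
qed

end


context proto3 begin

lemma getdata_ok:
  assumes IA: "invA s" and IB: "invB s" and IC: "invC s"
    and g: "ph s c = GD oi i R" "is_quorum C k Q" "Q \<subseteq> dom R"
      "L = (\<lambda>j. the (R j) \<inter> signed s)" "T = {t. k \<le> card {j \<in> Q. \<exists>e \<sigma>. (t, e, \<sigma>) \<in> L j}}"
    and hs: "hist s' = hist s @ [PrimResp i (RPair (Max T) w), PrimInv (ctr s) c (PutData (Max T) w)]"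
    and bd: "writes_conc_bounded \<delta> (hist s')"
  shows "respok (hist s') i (RPair (Max T) w)"
  unfolding respok_def
proof (intro allI impI, elim conjE)
  fix \<phi> a1 a2 b1 c1 c2 t\<phi> v\<phi> pk
  assume a: "a1 < length (hist s')" "hist s' ! a1 = PrimInv \<phi> c1 (PutData t\<phi> v\<phi>)"
    "a2 < length (hist s')" "hist s' ! a2 = PrimResp \<phi> RAck" "a2 < b1" "b1 < length (hist s')"
    "hist s' ! b1 = PrimInv i c2 pk" "pk = GetTag \<or> pk = GetData"
  let ?h = "hist s" and ?h' = "hist s'"
  have ids: "\<forall>e\<in>set ?h. evid e < ctr s" and U1: "uniqOI ?h" and U2: "uniqPI ?h" and U3: "uniqOR ?h"
    and PA: "\<And>c. phA ?h c (ph s c)"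
    using IA unfolding invA_def by blast+
  have PB: "\<And>c. phB s (ph s c)" and fs: "finite (signed s)" and sg: "\<And>x. x \<in> signed s \<Longrightarrow> tagok s (fst x)"
    and H0: "\<And>i c t v. PrimInv i c (PutData t v) \<in> set ?h \<Longrightarrow> t0 \<le> t"
    using IB unfolding invB_def by blast+
  have DONE: "\<And>n i. n < length ?h \<Longrightarrow> ?h ! n = PrimResp i RAck \<Longrightarrow>
        (\<exists>t v c QA. PrimInv i c (PutData t v) \<in> set ?h \<and> is_quorum C k QA \<and> (\<forall>j\<in>QA. j \<notin> B \<longrightarrow> ackd s n t j))"
    using IC unfolding invC_def by blast
  obtain m where m: "Suc m < length ?h" "?h ! m = OpInv oi c ReadOp" "?h ! Suc m = PrimInv i c GetData"
    and nr: "OpResp oi \<notin> set ?h" using PA[of c] g(1) by auto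
  have "PrimInv i c GetData \<in> set ?h" using m by (metis nth_mem)
  then have ilt: "i < ctr s" using ids by force
  have b1: "b1 < length ?h" "?h ! b1 = PrimInv i c2 pk" using idx2[OF hs a(6,7)] ilt by auto
  have "b1 = Suc m" using U2 b1 m unfolding uniqPI_def by blast
  have a2: "a2 < length ?h" "?h ! a2 = PrimResp \<phi> RAck" using b1 a(4,5) hs by (auto simp: nth_append)
  have "\<phi> < ctr s" using ids a2 by (metis evid.simps(4) nth_mem)
  then have a1: "a1 < length ?h" "?h ! a1 = PrimInv \<phi> c1 (PutData t\<phi> v\<phi>)" using idx2[OF hs a(1,2)] by auto
  then have a1': "PrimInv \<phi> c1 (PutData t\<phi> v\<phi>) \<in> set ?h" by (metis nth_mem)
  define P where "P = {t. \<exists>n i' c' v'. n < Suc m \<and> ?h ! n = PrimResp i' RAck \<and> PrimInv i' c' (PutData t v') \<in> set ?h}"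
  have "P \<subseteq> (\<lambda>e. ptag e t0) ` set ?h"
  proof
    fix t assume "t \<in> P"
    then obtain i' c' v' where "PrimInv i' c' (PutData t v') \<in> set ?h" unfolding P_def by blast
    then show "t \<in> (\<lambda>e. ptag e t0) ` set ?h" by (force intro: image_eqI)
  qed
  then have finP: "finite P" using finite_subset by blast
  have phiP: "t\<phi> \<in> P" unfolding P_def using a2 a1' a(5) \<open>b1 = Suc m\<close> by blast
  define tmax where "tmax = Max P"
  have "tmax \<in> P" unfolding tmax_def using finP phiP Max_in by blast
  then obtain nmax imax cm vm where nm: "nmax < Suc m" "?h ! nmax = PrimResp imax RAck"
    "PrimInv imax cm (PutData tmax vm) \<in> set ?h" unfolding P_def by blast
  have phile: "t\<phi> \<le> tmax" unfolding tmax_def using finP phiP by simp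
  have Pmax: "\<And>t. t \<in> P \<Longrightarrow> t \<le> tmax" unfolding tmax_def using finP by simp
  have nmlt: "nmax < length ?h" using nm(1) m(1) by simp
  obtain t' v' c' QA where q: "PrimInv imax c' (PutData t' v') \<in> set ?h" "is_quorum C k QA"
    "\<forall>j\<in>QA. j \<notin> B \<longrightarrow> ackd s nmax t' j" using DONE[OF nmlt nm(2)] by blast
  have "t' = tmax" using uniqPI_D[OF U2 q(1) nm(3)] by simp
  have ra: "reqafter nmax i ?h" unfolding reqafter_def using nm(1) m(1,3) by blast
  define Hs where "Hs = Q \<inter> QA - B"
  have kH: "k < card Hs" unfolding Hs_def using quorum_int[OF g(2) q(2)] .
  have HC: "Hs \<subseteq> C" unfolding Hs_def using g(2) unfolding is_quorum_def by blast
  have allGD: "\<forall>j X. j \<in> C \<longrightarrow> j \<notin> B \<longrightarrow> R j = Some X \<longrightarrow> X \<subseteq> signed s \<and> finite X"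
    using PB[of c] g(1) by (metis phB.simps(3))
  have Hprop: "\<exists>X. R j = Some X \<and> X \<subseteq> signed s \<and> finite X \<and> good \<delta> tmax X" if "j \<in> Hs" for j
  proof -
    have j: "j \<in> Q" "j \<in> QA" "j \<notin> B" "j \<in> C" using that HC unfolding Hs_def by auto
    obtain X where X: "R j = Some X" using j(1) g(3) by blast
    have "good \<delta> tmax X" using q(3) j(2,3) X g(1) ra \<open>t' = tmax\<close> unfolding ackd_def by blast
    then show ?thesis using X allGD j by blast
  qed
  have conc: "is_write ?h' w' \<and> concurrent ?h' w' oi" if W: "WrW s t w'" "tmax < t" for t w'
  proof -
    obtain cw where cw: "OpInv w' cw WriteOp \<in> set ?h"
      "(\<exists>i v S A. ph s cw = PD w' i t v S A \<and> OpResp w' \<notin> set ?h) \<or>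
      (\<exists>n i v. Suc n < length ?h \<and> ?h ! n = PrimResp i RAck \<and> ?h ! Suc n = OpResp w' \<and>
               PrimInv i cw (PutData t v) \<in> set ?h)" using W(1) unfolding WrW_def by blast
    obtain p where p: "p < length ?h" "?h ! p = OpInv w' cw WriteOp" using cw(1) by (metis in_set_conv_nth)
    have iw: "is_write ?h' w'" unfolding is_write_def using p hs by (auto simp: nth_append intro!: exI[of _ p])
    have inv1: "op_invoked ?h' w'" using iw unfolding is_write_def op_invoked_def by blast
    have inv2: "op_invoked ?h' oi" unfolding op_invoked_def using m hs by (auto simp: nth_append intro!: exI[of _ m])
    have ncb1: "\<not> completes_before ?h' oi w'"
    proof
      assume "completes_before ?h' oi w'"
      then obtain n where n: "n < length ?h'" "?h' ! n = OpResp oi" unfolding completes_before_def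
        using order.strict_trans by blast
      then have "n < length ?h \<and> ?h ! n = OpResp oi" using idx2[OF hs n] by auto
      then show False using nr by (metis nth_mem)
    qed
    have ncb2: "\<not> completes_before ?h' w' oi"
    proof
      assume "completes_before ?h' w' oi"
      then obtain n' m' c'' kd where cb: "n' < m'" "m' < length ?h'" "?h' ! n' = OpResp w'" "?h' ! m' = OpInv oi c'' kd"
        unfolding completes_before_def by blast
      have m': "m' < length ?h" "?h ! m' = OpInv oi c'' kd" using idx2[OF hs cb(2,4)] by auto
      have "m' = m" using U1 m' m unfolding uniqOI_def by (metis Suc_lessD)
      have n': "n' < length ?h" "?h ! n' = OpResp w'" using cb(1,3) m'(1) hs by (auto simp: nth_append)
      then have "OpResp w' \<in> set ?h" by (metis nth_mem)
      then obtain n0 i0 v0 where n0: "Suc n0 < length ?h" "?h ! n0 = PrimResp i0 RAck" "?h ! Suc n0 = OpResp w'"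
        "PrimInv i0 cw (PutData t v0) \<in> set ?h" using cw(2) by blast
      have "Suc n0 = n'" using U3 n0(1,3) n' unfolding uniqOR_def by blast
      then have "n0 < Suc m" using cb(1) \<open>m' = m\<close> by simp
      then have "t \<in> P" unfolding P_def using n0(2,4) by blast
      then show False using Pmax W(2) by fastforce
    qed
    show ?thesis using iw inv1 inv2 ncb1 ncb2 unfolding concurrent_def by blast
  qed
  have allin: "tmax \<in> fst ` the (R j)" if jH0: "j \<in> Hs" for j
  proof (rule ccontr)
    assume nin: "tmax \<notin> fst ` the (R j)"
    obtain X where X: "R j = Some X" "X \<subseteq> signed s" "finite X" "good \<delta> tmax X" using Hprop[OF jH0] by blast
    define G where "G = {t'\<in>fst ` X. tmax < t'}"
    have cG: "\<delta> + 1 \<le> card G" using X(4) nin X(1) unfolding good_def goodT_def G_def by auto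
    have t0le: "t0 \<le> tmax" using H0[OF a1'] phile by simp
    have exw: "\<exists>w'. WrW s t w'" if tG: "t \<in> G" for t
    proof -
      obtain x where "x \<in> X" "t = fst x" "tmax < t" using tG unfolding G_def by blast
      then have "tagok s t" using sg X(2) by blast
      moreover have "t \<noteq> t0" using t0le \<open>tmax < t\<close> by auto
      ultimately show ?thesis unfolding tagok_def by blast
    qed
    define wf where "wf = (\<lambda>t. SOME w'. WrW s t w')"
    have wfW: "WrW s t (wf t)" if tG: "t \<in> G" for t unfolding wf_def using someI_ex[OF exw[OF tG]] .
    have inj: "inj_on wf G"
    proof (rule inj_onI)
      fix x y assume "x \<in> G" "y \<in> G" "wf x = wf y"
      then show "x = y" using WrW_fun[OF IA wfW[of x]] wfW[of y] by simp
    qed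
    define W where "W = {w'. is_write ?h' w' \<and> concurrent ?h' w' oi}"
    have sub: "wf ` G \<subseteq> W"
    proof
      fix w' assume "w' \<in> wf ` G"
      then obtain t where "t \<in> G" "w' = wf t" by blast
      then have "WrW s t w'" "tmax < t" using wfW unfolding G_def by auto
      then show "w' \<in> W" unfolding W_def using conc by blast
    qed
    have finW: "finite W" unfolding W_def
      using op_invoked_fin[of ?h'] by (rule finite_subset[rotated]) (auto simp: concurrent_def)
    have isr: "is_read ?h' oi" unfolding is_read_def using m hs by (auto simp: nth_append intro!: exI[of _ m])
    have "card W \<le> \<delta>" using bd isr unfolding writes_conc_bounded_def W_def by blast
    moreover have "card G = card (wf ` G)" using inj card_image by fastforce
    moreover have "card (wf ` G) \<le> card W" using sub finW card_mono by blast
    ultimately show False using cG by simp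
  qed
  have finQ: "finite Q" using g(2) finC finite_subset unfolding is_quorum_def by blast
  have "Hs \<subseteq> {j \<in> Q. \<exists>e \<sigma>. (tmax, e, \<sigma>) \<in> L j}"
  proof
    fix j assume jH: "j \<in> Hs"
    obtain X where X: "R j = Some X" "X \<subseteq> signed s" using Hprop[OF jH] by blast
    obtain y where "y \<in> X" "fst y = tmax" using allin[OF jH] X(1) by force
    then have "(tmax, fst (snd y), snd (snd y)) \<in> L j" using X g(4) by (cases y) auto
    then show "j \<in> {j \<in> Q. \<exists>e \<sigma>. (tmax, e, \<sigma>) \<in> L j}" using jH unfolding Hs_def by blast
  qed
  then have "card Hs \<le> card {j \<in> Q. \<exists>e \<sigma>. (tmax, e, \<sigma>) \<in> L j}" using finQ by (intro card_mono) auto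
  then have inT: "tmax \<in> T" using kH g(5) by simp
  have "T \<subseteq> fst ` signed s" using T_sub[OF g(5), of "signed s"] g(4) by auto
  then have "finite T" using fs finite_subset by blast
  then have "tmax \<le> Max T" using inT by simp
  then have "t\<phi> \<le> Max T" using phile by simp
  then show "\<exists>t. (RPair (Max T) w = RTag t \<or> (\<exists>v. RPair (Max T) w = RPair t v)) \<and> t\<phi> \<le> t" by blast
qed

end


context proto3 begin

lemma main_init: "main (init_state C enc t0 v0)"
  by (simp add: main_def init_state_def)

lemma main_step:
  assumes IA: "invA s" and IB: "invB s" and IC: "invC s" and IA': "invA s'" and st: "stp s s'" and M: "main s"
  shows "main s'"
  unfolding main_def
proof (intro impI allI)
  fix b2 \<pi> r
  assume bd': "writes_conc_bounded \<delta> (hist s')" and b2: "b2 < length (hist s')" "hist s' ! b2 = PrimResp \<pi> r"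
  obtain E where E: "hist s' = hist s @ E" using hist_ext[OF st] by blast
  have U1': "uniqOI (hist s')" and U2': "uniqPI (hist s')" using IA' unfolding invA_def by blast+
  have ids: "\<forall>e\<in>set (hist s). evid e < ctr s" and PA: "\<And>c. phA (hist s) c (ph s c)"
    using IA unfolding invA_def by blast+
  have bd: "writes_conc_bounded \<delta> (hist s)" using bounded_prefix[of \<delta> "hist s" E] bd' U1' E by simp
  show "respok (hist s') \<pi> r"
  proof (cases "b2 < length (hist s)")
    case True
    then have h: "hist s ! b2 = PrimResp \<pi> r" using b2 E by (simp add: nth_append)
    then have "respok (hist s) \<pi> r" using M bd True unfolding main_def by blast
    moreover have "\<pi> < ctr s" using ids h True by (metis evid.simps(4) nth_mem)
    ultimately show ?thesis using respok_ext[OF IA st] by blast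
  next
    case False
    then have le: "length (hist s) \<le> b2" by simp
    from new_PrimResp[OF st le b2] show ?thesis
    proof (elim disjE exE conjE)
      fix c oi v R Q T
      assume g: "ph s c = GT oi \<pi> v R" "is_quorum C k Q" "Q \<subseteq> dom R"
        "T = {fst x | x j. j \<in> Q \<and> R j = Some x \<and> x \<in> signed s}" "T \<noteq> {}" "r = RTag (Max T)"
        "hist s' = hist s @ [PrimResp \<pi> (RTag (Max T)), PrimInv (ctr s) c (PutData (Suc (fst (Max T)), c) v)]"
      show ?thesis using gettag_ok[OF IA IB IC g(1-4) g(7)] g(6) by simp
    next
      fix c oi R Q L T w
      assume g: "ph s c = GD oi \<pi> R" "is_quorum C k Q" "Q \<subseteq> dom R"
        "L = (\<lambda>j. the (R j) \<inter> signed s)" "T = {t. k \<le> card {j \<in> Q. \<exists>e \<sigma>. (t, e, \<sigma>) \<in> L j}}" "T \<noteq> {}"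
        "r = RPair (Max T) w"
        "hist s' = hist s @ [PrimResp \<pi> (RPair (Max T) w), PrimInv (ctr s) c (PutData (Max T) w)]"
      show ?thesis using getdata_ok[OF IA IB IC g(1-5) g(8) bd'] g(7) by simp
    next
      fix c oi t v S A
      assume g: "ph s c = PD oi \<pi> t v S A" "r = RAck" "hist s' = hist s @ [PrimResp \<pi> RAck, OpResp oi]"
      have p1: "PrimInv \<pi> c (PutData t v) \<in> set (hist s')" using PA[of c] g(1,3) by simp
      show ?thesis unfolding respok_def
      proof (intro allI impI, elim conjE)
        fix \<phi> a1 a2 b1 c1 c2 t\<phi> v\<phi> pk
        assume a: "b1 < length (hist s')" "hist s' ! b1 = PrimInv \<pi> c2 pk" "pk = GetTag \<or> pk = GetData"
        have "PrimInv \<pi> c2 pk \<in> set (hist s')" using a(1,2) by (metis nth_mem)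
        then have "pk = PutData t v" using uniqPI_D[OF U2' p1] by simp
        then show "\<exists>t. (r = RTag t \<or> (\<exists>v. r = RPair t v)) \<and> t\<phi> \<le> t" using a(3) by simp
      qed
    qed
  qed
qed

lemma main_reach: "rch s \<Longrightarrow> main s"
proof (induction rule: reach.induct)
  case reach_init then show ?case by (rule main_init)
next
  case (reach_step s s')
  have "invA s \<and> invB s \<and> invC s" using inv_reach[OF reach_step(1)] .
  moreover have "invA s'" using inv_reach[OF reach.reach_step[OF reach_step(1,2)]] by blast
  ultimately show ?case using main_step reach_step by blast
qed

end

theorem mainTheorem4:
  fixes C B :: "'p set" and k b \<delta> :: nat
    and enc :: "'v \<Rightarrow> 'p \<Rightarrow> 'e" and dec :: "('p \<times> 'e) set \<Rightarrow> 'v"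
    and t0 :: "nat \<times> 'c::linorder" and v0 :: 'v
    and s :: "('p,'c,'v,'e) gstate"
    and \<phi> \<pi> a1 a2 b1 b2 :: nat and c1 c2 :: 'c
    and t\<phi> :: "nat \<times> 'c" and v\<phi> :: 'v and pk :: "('c,'v) pkind" and r :: "('c,'v) presult"
  assumes "finite C" and "1 \<le> k" and "k \<le> card C" and "1 \<le> \<delta>"
    and "B \<subseteq> C" and "card B \<le> b" and "real b < (real (card C) - real k) / 3"
    and "reach C B k \<delta> enc dec t0 v0 s"
    and "writes_conc_bounded \<delta> (hist s)"
    and "a1 < length (hist s)" and "hist s ! a1 = PrimInv \<phi> c1 (PutData t\<phi> v\<phi>)"
    and "a2 < length (hist s)" and "hist s ! a2 = PrimResp \<phi> RAck"
    and "a2 < b1"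
    and "b1 < length (hist s)" and "hist s ! b1 = PrimInv \<pi> c2 pk" and "pk = GetTag \<or> pk = GetData"
    and "b2 < length (hist s)" and "hist s ! b2 = PrimResp \<pi> r"
  shows "\<exists>t. (r = RTag t \<or> (\<exists>v. r = RPair t v)) \<and> t\<phi> \<le> t"
proof -
  have "real (3 * card B + k) < real (card C)" using assms(6,7) by simp
  then have bnd: "3 * card B + k < card C" by (simp only: of_nat_less_iff)
  interpret P: proto3 C B k \<delta> enc dec t0 v0
    by unfold_locales (use assms(1,2,5) bnd in auto)
  have "P.main s" using P.main_reach assms(8) by blast
  then have "P.respok (hist s) \<pi> r" using assms(9,18,19) unfolding P.main_def by blast
  then show ?thesis using assms(10-17) unfolding P.respok_def by blast
qed


end
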